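(* Let $X$ be a tree of bounded valence, $\Gamma<\operatorname{Aut}(X)$ with $\Gamma\backslash X_0$ finite, $p$ a $\Gamma$-invariant transition kernel with $(X_0,p)$ irreducible and $k\in\mathbb{N}$ with $d(x,y)>k\Rightarrow p(x,y)=0$. Then for every complex $z$ of sufficiently small modulus, $v_z=z\,\psi(v_z)$; that is, for every $(a,b)_y\in\Xi$, $$G_z(a,b;\mathcal{B}(y)^\complement)=z\,p(a,b)+\sum_{c\in\mathcal{B}(y)^\complement}z\,p(a,c)\,(v_z)_{[c,y]}(c,b).$$
   Context: $\mathcal{B}(y)=\{w:d(y,w)\le k\}$, $\partial\mathcal{B}(y)=\{w:d(y,w)=k+1\}$. $p^{(n)}(a,b;\Omega)=\sum p(\omega_0,\omega_1)\cdots p(\omega_{n-1},\omega_n)$ over sequences from $a$ to $b$ with $\omega_1,\dots,\omega_{n-1}\in\Omega$; $G_z(a,b;\Omega)=\sum_np^{(n)}(a,b;\Omega)z^n$. $\Xi_y=\{(a,b)\in\partial\mathcal{B}(y)\times\mathcal{B}(y):\exists n,\,p^{(n)}(a,b;\mathcal{B}(y)^\complement)>0\}$, $\Xi=\bigsqcup_y\Xi_y$ with elements $(a,b)_y$. $v_z:\Xi\to\mathbb{C}$, $v_z((a,b)_y)=G_z(a,b;\mathcal{B}(y)^\complement)$. For distinct $x,y$ with geodesic $[x,y]=(x_0,\dots,x_m)$, $\Xi_{[x,y]}$ is the set of tuples $(c_0,\dots,c_l)$, $0<l\le m$, for which there are integers $0<i_1<\dots<i_l\le m$ with $c_0\in\mathcal{B}(x)\cap\partial\mathcal{B}(x_{i_1})$,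 $c_j\in\mathcal{B}(x_{i_j})\cap\partial\mathcal{B}(x_{i_{j+1}})$ for $1\le j\le l-1$, $c_l\in\mathcal{B}(x_{i_l})\cap\mathcal{B}(y)$, and $(c_{j-1},c_j)\in\Xi_{x_{i_j}}$ for all $j$; the indices are determined by $i_s=1+\max\{i:c_{s-1}\in\mathcal{B}(x_i)\}$. For $J:\Xi\to\mathbb{C}$ and $c\in\mathcal{B}(x)\setminus\mathcal{B}(y)$, $b\in\mathcal{B}(y)$: $J_{[x,y]}(c,b)=\sum_{(c_0,\dots,c_l)\in\Xi_{[x,y]},\,c_0=c,\,c_l=b}\prod_{j=1}^lJ((c_{j-1},c_j)_{x_{i_j}})$ (a finite sum). The map $\psi$ on functions $\Xi\to\mathbb{C}$ is $\psi(J)((a,b)_y)=p(a,b)+\sum_{c\in\mathcal{B}(y)^\complement}p(a,c)J_{[c,y]}(c,b)$. *)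

theory Defs
  imports "HOL-Analysis.Analysis"
begin

definition walk :: "('v \<Rightarrow> 'v \<Rightarrow> bool) \<Rightarrow> 'v list \<Rightarrow> bool" where
  "walk E ws \<longleftrightarrow> ws \<noteq> [] \<and> (\<forall>i. Suc i < length ws \<longrightarrow> E (ws ! i) (ws ! Suc i))"

definition is_cycle :: "('v \<Rightarrow> 'v \<Rightarrow> bool) \<Rightarrow> 'v list \<Rightarrow> bool" where
  "is_cycle E ws \<longleftrightarrow> walk E ws \<and> length ws \<ge> 3 \<and> distinct ws \<and> E (last ws) (hd ws)"

definition is_tree :: "('v \<Rightarrow> 'v \<Rightarrow> bool) \<Rightarrow> bool" where
  "is_tree E \<longleftrightarrow> (\<forall>x y. E x y \<longrightarrow> E y x) \<and> (\<forall>x. \<not> E x x)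
     \<and> (\<forall>x y. \<exists>ws. walk E ws \<and> hd ws = x \<and> last ws = y)
     \<and> (\<nexists>ws. is_cycle E ws)"

definition bounded_valence :: "('v \<Rightarrow> 'v \<Rightarrow> bool) \<Rightarrow> bool" where
  "bounded_valence E \<longleftrightarrow> (\<exists>D::nat. \<forall>x. finite {y. E x y} \<and> card {y. E x y} \<le> D)"

definition gdist :: "('v \<Rightarrow> 'v \<Rightarrow> bool) \<Rightarrow> 'v \<Rightarrow> 'v \<Rightarrow> nat" where
  "gdist E x y = (LEAST n. \<exists>ws. walk E ws \<and> hd ws = x \<and> last ws = y \<and> length ws = Suc n)"

text \<open>The geodesic [x,y] = (x_0,...,x_m), as a list of length m+1.\<close>
definition geod :: "('v \<Rightarrow> 'v \<Rightarrow> bool) \<Rightarrow> 'v \<Rightarrow> 'v \<Rightarrow> 'v list" where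
  "geod E x y = (THE ws. walk E ws \<and> hd ws = x \<and> last ws = y \<and> length ws = Suc (gdist E x y))"

definition is_aut :: "('v \<Rightarrow> 'v \<Rightarrow> bool) \<Rightarrow> ('v \<Rightarrow> 'v) \<Rightarrow> bool" where
  "is_aut E g \<longleftrightarrow> bij g \<and> (\<forall>x y. E x y \<longleftrightarrow> E (g x) (g y))"

definition aut_subgroup :: "('v \<Rightarrow> 'v \<Rightarrow> bool) \<Rightarrow> ('v \<Rightarrow> 'v) set \<Rightarrow> bool" where
  "aut_subgroup E \<Gamma> \<longleftrightarrow> (\<forall>g\<in>\<Gamma>. is_aut E g) \<and> id \<in> \<Gamma>
     \<and> (\<forall>g\<in>\<Gamma>. \<forall>h\<in>\<Gamma>. g \<circ> h \<in> \<Gamma>) \<and> (\<forall>g\<in>\<Gamma>. inv g \<in> \<Gamma>)"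

text \<open>The set of \<Gamma>-orbits on the vertex set X_0 (= UNIV).\<close>
definition orbits :: "('v \<Rightarrow> 'v) set \<Rightarrow> 'v set set" where
  "orbits \<Gamma> = {(\<lambda>g. g x) ` \<Gamma> | x. True}"

definition transition_kernel :: "('v \<Rightarrow> 'v \<Rightarrow> real) \<Rightarrow> bool" where
  "transition_kernel p \<longleftrightarrow> (\<forall>x y. p x y \<ge> 0) \<and> (\<forall>x. (p x has_sum 1) UNIV)"

text \<open>p^(n)(a,b;\<Omega>): sum over sequences a = w_0, w_1, ..., w_n = b with
  w_1,...,w_{n-1} in \<Omega> of p(w_0,w_1)...p(w_{n-1},w_n).\<close>
definition pn :: "('v \<Rightarrow> 'v \<Rightarrow> real) \<Rightarrow> nat \<Rightarrow> 'v set \<Rightarrow> 'v \<Rightarrow> 'v \<Rightarrow> real" where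
  "pn p n \<Omega> a b =
     (if n = 0 then (if a = b then 1 else 0)
      else (\<Sum>\<^sub>\<infinity>ws\<in>{ws. length ws = n - 1 \<and> set ws \<subseteq> \<Omega>}.
              prod_list (map2 p (a # ws) (ws @ [b]))))"

definition irreducible_kernel :: "('v \<Rightarrow> 'v \<Rightarrow> real) \<Rightarrow> bool" where
  "irreducible_kernel p \<longleftrightarrow> (\<forall>x y. \<exists>n. pn p n UNIV x y > 0)"

definition Gz :: "('v \<Rightarrow> 'v \<Rightarrow> real) \<Rightarrow> complex \<Rightarrow> 'v \<Rightarrow> 'v \<Rightarrow> 'v set \<Rightarrow> complex" where
  "Gz p z a b \<Omega> = (\<Sum>n. complex_of_real (pn p n \<Omega> a b) * z ^ n)"

definition ball_k :: "('v \<Rightarrow> 'v \<Rightarrow> bool) \<Rightarrow> nat \<Rightarrow> 'v \<Rightarrow> 'v set" where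
  "ball_k E k y = {w. gdist E y w \<le> k}"

definition bdry_k :: "('v \<Rightarrow> 'v \<Rightarrow> bool) \<Rightarrow> nat \<Rightarrow> 'v \<Rightarrow> 'v set" where
  "bdry_k E k y = {w. gdist E y w = Suc k}"

definition Xi :: "('v \<Rightarrow> 'v \<Rightarrow> bool) \<Rightarrow> ('v \<Rightarrow> 'v \<Rightarrow> real) \<Rightarrow> nat \<Rightarrow> 'v \<Rightarrow> ('v \<times> 'v) set" where
  "Xi E p k y = {(a, b). a \<in> bdry_k E k y \<and> b \<in> ball_k E k y
                  \<and> (\<exists>n. pn p n (- ball_k E k y) a b > 0)}"

text \<open>\<Xi> as a disjoint union: the element (a,b)_y is the triple (a,b,y).\<close>
definition XiAll :: "('v \<Rightarrow> 'v \<Rightarrow> bool) \<Rightarrow> ('v \<Rightarrow> 'v \<Rightarrow> real) \<Rightarrow> nat \<Rightarrow> ('v \<times> 'v \<times> 'v) set" where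
  "XiAll E p k = {(a, b, y). (a, b) \<in> Xi E p k y}"

definition vz :: "('v \<Rightarrow> 'v \<Rightarrow> bool) \<Rightarrow> ('v \<Rightarrow> 'v \<Rightarrow> real) \<Rightarrow> nat \<Rightarrow> complex
                   \<Rightarrow> 'v \<times> 'v \<times> 'v \<Rightarrow> complex" where
  "vz E p k z = (\<lambda>(a, b, y). Gz p z a b (- ball_k E k y))"

text \<open>Admissible index data: cs = (c_0,...,c_l), "is" = (i_1,...,i_l) (0-based list,
  is!(j-1) = i_j), along the geodesic xs = [x,y] = (x_0,...,x_m).\<close>
definition Xi_path_idx :: "('v \<Rightarrow> 'v \<Rightarrow> bool) \<Rightarrow> ('v \<Rightarrow> 'v \<Rightarrow> real) \<Rightarrow> nat \<Rightarrow> 'v \<Rightarrow> 'v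
                            \<Rightarrow> 'v list \<Rightarrow> nat list \<Rightarrow> bool" where
  "Xi_path_idx E p k x y cs is \<longleftrightarrow>
     (let xs = geod E x y; m = length xs - 1; l = length is in
        length cs = Suc l \<and> 0 < l \<and> l \<le> m
      \<and> 0 < is ! 0 \<and> (\<forall>j. Suc j < l \<longrightarrow> is ! j < is ! Suc j) \<and> is ! (l - 1) \<le> m
      \<and> cs ! 0 \<in> ball_k E k x \<inter> bdry_k E k (xs ! (is ! 0))
      \<and> (\<forall>j. 1 \<le> j \<and> j \<le> l - 1 \<longrightarrow>
             cs ! j \<in> ball_k E k (xs ! (is ! (j - 1))) \<inter> bdry_k E k (xs ! (is ! j)))
      \<and> cs ! l \<in> ball_k E k (xs ! (is ! (l - 1))) \<inter> ball_k E k y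
      \<and> (\<forall>j. 1 \<le> j \<and> j \<le> l \<longrightarrow> (cs ! (j - 1), cs ! j) \<in> Xi E p k (xs ! (is ! (j - 1)))))"

definition Xi_path :: "('v \<Rightarrow> 'v \<Rightarrow> bool) \<Rightarrow> ('v \<Rightarrow> 'v \<Rightarrow> real) \<Rightarrow> nat \<Rightarrow> 'v \<Rightarrow> 'v \<Rightarrow> 'v list set" where
  "Xi_path E p k x y = {cs. \<exists>is. Xi_path_idx E p k x y cs is}"

definition path_index :: "('v \<Rightarrow> 'v \<Rightarrow> bool) \<Rightarrow> nat \<Rightarrow> 'v \<Rightarrow> 'v \<Rightarrow> 'v list \<Rightarrow> nat \<Rightarrow> nat" where
  "path_index E k x y cs s =
     (let xs = geod E x y; m = length xs - 1 in
        Suc (Max {i. i \<le> m \<and> cs ! (s - 1) \<in> ball_k E k (xs ! i)}))"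

definition J_path :: "('v \<Rightarrow> 'v \<Rightarrow> bool) \<Rightarrow> ('v \<Rightarrow> 'v \<Rightarrow> real) \<Rightarrow> nat
                      \<Rightarrow> ('v \<times> 'v \<times> 'v \<Rightarrow> complex) \<Rightarrow> 'v \<Rightarrow> 'v \<Rightarrow> 'v \<Rightarrow> 'v \<Rightarrow> complex" where
  "J_path E p k J x y c b =
     (\<Sum>cs\<in>{cs \<in> Xi_path E p k x y. hd cs = c \<and> last cs = b}.
        \<Prod>j\<in>{1..length cs - 1}.
          J (cs ! (j - 1), cs ! j, geod E x y ! path_index E k x y cs j))"

definition psi :: "('v \<Rightarrow> 'v \<Rightarrow> bool) \<Rightarrow> ('v \<Rightarrow> 'v \<Rightarrow> real) \<Rightarrow> nat
                   \<Rightarrow> ('v \<times> 'v \<times> 'v \<Rightarrow> complex) \<Rightarrow> 'v \<times> 'v \<times> 'v \<Rightarrow> complex" where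
  "psi E p k J = (\<lambda>(a, b, y). complex_of_real (p a b)
      + (\<Sum>\<^sub>\<infinity>c\<in>- ball_k E k y. complex_of_real (p a c) * J_path E p k J c y c b))"

end

theory Submission
  imports Defs
begin

lemma walk_iff: "walk E ws \<longleftrightarrow> ws \<noteq> [] \<and> successively E ws"
  by (simp add: walk_def successively_conv_nth)

locale tgraph =
  fixes E :: "'v \<Rightarrow> 'v \<Rightarrow> bool"
  assumes tree: "is_tree E"
begin

abbreviation d where "d \<equiv> gdist E"

lemma symE: "E x y \<Longrightarrow> E y x" using tree by (auto simp: is_tree_def)
lemma irrefl: "\<not> E x x" using tree by (auto simp: is_tree_def)
lemma conn: "\<exists>ws. walk E ws \<and> hd ws = x \<and> last ws = y" using tree by (auto simp: is_tree_def)
lemma acyc: "\<not> is_cycle E ws" using tree by (auto simp: is_tree_def)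

lemma dist_ex: "\<exists>ws. walk E ws \<and> hd ws = x \<and> last ws = y \<and> length ws = Suc (d x y)"
proof -
  obtain ws where ws: "walk E ws" "hd ws = x" "last ws = y" using conn by blast
  then have "ws \<noteq> []" by (simp add: walk_def)
  then have "\<exists>n ws. walk E ws \<and> hd ws = x \<and> last ws = y \<and> length ws = Suc n"
    using ws by (intro exI[of _ "length ws - 1"] exI[of _ ws]) auto
  then show ?thesis unfolding gdist_def by (rule LeastI_ex)
qed

lemma dist_le: "walk E ws \<Longrightarrow> hd ws = x \<Longrightarrow> last ws = y \<Longrightarrow> d x y \<le> length ws - 1"
  unfolding gdist_def
  by (rule Least_le) (auto simp: walk_def)

lemma walk_append: "walk E xs \<Longrightarrow> walk E ys \<Longrightarrow> last xs = hd ys \<Longrightarrow> walk E (xs @ tl ys)"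
proof -
  assume a: "walk E xs" "walk E ys" "last xs = hd ys"
  then have ys: "ys = hd ys # tl ys" by (simp add: walk_def)
  from a have sx: "successively E xs" and sy: "successively E (hd ys # tl ys)" 
    using ys by (auto simp: walk_iff)
  have "successively E (tl ys)" using sy by (cases "tl ys") auto
  moreover have "tl ys \<noteq> [] \<Longrightarrow> E (last xs) (hd (tl ys))" using sy a(3) by (cases "tl ys") auto
  ultimately show ?thesis using a sx by (auto simp: walk_iff successively_append_iff)
qed

lemma walk_rev: "walk E xs \<Longrightarrow> walk E (rev xs)"
  by (auto simp: walk_iff intro: successively_mono symE)

lemma tri: "d x z \<le> d x y + d y z"
proof -
  obtain xs where xs: "walk E xs" "hd xs = x" "last xs = y" "length xs = Suc (d x y)" using dist_ex by blast
  obtain ys where ys: "walk E ys" "hd ys = y" "last ys = z" "length ys = Suc (d y z)" using dist_ex by blast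
  have w: "walk E (xs @ tl ys)" using xs ys walk_append by auto
  have "hd (xs @ tl ys) = x" using xs by (cases xs) auto
  moreover have "last (xs @ tl ys) = z" using xs ys by (cases ys; cases "tl ys") auto
  ultimately have "d x z \<le> length (xs @ tl ys) - 1" using dist_le w by blast
  then show ?thesis using xs ys by auto
qed

lemma dsym: "d x y = d y x"
proof -
  have *: "d x y \<le> d y x" for x y
  proof -
    obtain xs where xs: "walk E xs" "hd xs = y" "last xs = x" "length xs = Suc (d y x)" using dist_ex by blast
    have "walk E (rev xs)" using walk_rev xs by auto
    moreover have "hd (rev xs) = x" "last (rev xs) = y" using xs by (auto simp: hd_rev last_rev)
    ultimately show ?thesis using dist_le[of "rev xs" x y] xs by auto
  qed
  show ?thesis using *[of x y] *[of y x] by auto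
qed

lemma d0[simp]: "d x x = 0"
  using dist_le[of "[x]" x x] by (auto simp: walk_def)

lemma d0_iff[simp]: "d x y = 0 \<longleftrightarrow> x = y"
proof
  assume "d x y = 0"
  then obtain xs where xs: "walk E xs" "hd xs = x" "last xs = y" "length xs = 1" using dist_ex by force
  then show "x = y" by (cases xs) auto
qed auto

lemma dE: "E x y \<Longrightarrow> d x y = 1"
proof -
  assume e: "E x y"
  then have "d x y \<le> 1" using dist_le[of "[x,y]" x y] by (auto simp: walk_def nth_Cons split: nat.splits)
  moreover have "x \<noteq> y" using e irrefl by auto
  ultimately show ?thesis using d0_iff[of x y] by linarith
qed

lemma d1E: "d x y = 1 \<Longrightarrow> E x y"
proof -
  assume "d x y = 1"
  then obtain xs where xs: "walk E xs" "hd xs = x" "last xs = y" "length xs = 2" using dist_ex by force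
  then obtain a b where "xs = [a,b]" by (cases xs; cases "tl xs") auto
  then show ?thesis using xs by (auto simp: walk_def)
qed

lemma dE_le: "E x y \<Longrightarrow> d u x \<le> d u y + 1"
  using tri[of u x y] dE[of y x] symE dsym by fastforce

definition geo :: "'v list \<Rightarrow> bool" where
  "geo ws \<longleftrightarrow> walk E ws \<and> length ws = Suc (d (hd ws) (last ws))"

lemma subwalk:
  assumes "walk E ws" "i \<le> j" "j < length ws"
  shows "d (ws ! i) (ws ! j) \<le> j - i"
proof -
  let ?vs = "take (Suc (j - i)) (drop i ws)"
  have len: "length ?vs = Suc (j - i)" using assms by auto
  have nth: "t < Suc (j - i) \<Longrightarrow> ?vs ! t = ws ! (i + t)" for t using assms by auto
  have "walk E ?vs" unfolding walk_def
  proof (intro conjI allI impI)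
    show "?vs \<noteq> []" using len by (metis Zero_not_Suc list.size(3))
    fix t assume t: "Suc t < length ?vs"
    have "E (ws ! (i + t)) (ws ! Suc (i + t))" using assms(1) t len assms(3) unfolding walk_def by auto
    then show "E (?vs ! t) (?vs ! Suc t)" using nth[of t] nth[of "Suc t"] t len by simp
  qed
  moreover have "hd ?vs = ws ! i" using nth[of 0] len by (simp add: hd_conv_nth)
  moreover have "last ?vs = ws ! j" using nth[of "j - i"] len assms by (simp add: last_conv_nth)
  ultimately show ?thesis using dist_le len by fastforce
qed

lemma geo_d:
  assumes "geo ws" "i \<le> j" "j < length ws"
  shows "d (ws ! i) (ws ! j) = j - i"
proof -
  have w: "walk E ws" and l: "length ws = Suc (d (hd ws) (last ws))" using assms by (auto simp: geo_def)
  have ne: "ws \<noteq> []" using w by (simp add: walk_def)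
  have "d (hd ws) (last ws) \<le> d (hd ws) (ws ! i) + d (ws ! i) (ws ! j) + d (ws ! j) (last ws)"
    using tri[of "hd ws" "last ws" "ws!i"] tri[of "ws!i" "last ws" "ws!j"] by linarith
  moreover have "d (hd ws) (ws ! i) \<le> i" using subwalk[OF w, of 0 i] assms ne by (simp add: hd_conv_nth)
  moreover have "d (ws ! j) (last ws) \<le> length ws - 1 - j" 
    using subwalk[OF w, of j "length ws - 1"] assms ne by (simp add: last_conv_nth)
  moreover have "d (ws ! i) (ws ! j) \<le> j - i" using subwalk[OF w] assms by auto
  ultimately show ?thesis using l assms by linarith
qed

lemma geo_distinct: "geo ws \<Longrightarrow> distinct ws"
proof -
  assume g: "geo ws"
  show ?thesis unfolding distinct_conv_nth
  proof (intro allI impI)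
    fix i j assume "i < length ws" "j < length ws" "i \<noteq> j"
    then show "ws ! i \<noteq> ws ! j" using geo_d[OF g, of i j] geo_d[OF g, of j i]
      by (cases "i \<le> j") auto
  qed
qed

lemma dist_ex_geo: "\<exists>ws. geo ws \<and> hd ws = x \<and> last ws = y"
  using dist_ex[of x y] by (auto simp: geo_def)

lemma simple_path:
  "walk E ws \<Longrightarrow> \<exists>ps. walk E ps \<and> distinct ps \<and> hd ps = hd ws \<and> last ps = last ws \<and> set ps \<subseteq> set ws"
proof (induction "length ws" arbitrary: ws rule: less_induct)
  case less
  show ?case
  proof (cases "distinct ws")
    case True then show ?thesis using less.prems by blast
  next
    case False
    then obtain xs y ys zs where ws: "ws = xs @ y # ys @ y # zs" using not_distinct_decomp[OF False] by auto
    let ?vs = "xs @ y # zs"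
    have s: "successively E ws" using less.prems by (simp add: walk_iff)
    have "successively E ?vs" using s unfolding ws
      by (auto simp: successively_append_iff successively_Cons)
    then have wv: "walk E ?vs" by (simp add: walk_iff)
    have "length ?vs < length ws" using ws by simp
    then obtain ps where ps: "walk E ps" "distinct ps" "hd ps = hd ?vs" "last ps = last ?vs" "set ps \<subseteq> set ?vs"
      using less.hyps wv by blast
    moreover have "hd ?vs = hd ws" "last ?vs = last ws" using ws by (cases xs; auto; cases zs; auto)+
    moreover have "set ?vs \<subseteq> set ws" using ws by auto
    ultimately show ?thesis by (intro exI[of _ ps]) auto
  qed
qed

lemma geo_nth_notin:
  assumes "geo G" "hd G = p" "last G = a" "d p b > d p a"
  shows "b \<notin> set G"
proof
  assume "b \<in> set G"
  then obtain j where j: "j < length G" "G ! j = b" by (auto simp: in_set_conv_nth)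
  have ne: "G \<noteq> []" using j by auto
  have "d p b = j" using geo_d[OF assms(1), of 0 j] j assms(2) ne by (simp add: hd_conv_nth)
  moreover have "length G = Suc (d p a)" using assms by (simp add: geo_def)
  ultimately show False using assms j by linarith
qed

lemma cross_edge:
  assumes ab: "E a b" and p: "d p a < d p b" and q: "d q b \<le> d q a" and pq: "E p q"
  shows "p = a \<and> q = b"
proof (rule ccontr)
  assume nab: "\<not> (p = a \<and> q = b)"
  obtain G1 where G1: "geo G1" "hd G1 = p" "last G1 = a" using dist_ex_geo by blast
  obtain G2 where G2: "geo G2" "hd G2 = q" "last G2 = b" using dist_ex_geo by blast
  have bG1: "b \<notin> set G1" using geo_nth_notin[OF G1] p by auto
  have aG2: "a \<notin> set G2"
  proof
    assume "a \<in> set G2"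
    then obtain j where j: "j < length G2" "G2 ! j = a" by (auto simp: in_set_conv_nth)
    have ne: "G2 \<noteq> []" using j by auto
    have l2: "length G2 = Suc (d q b)" using G2 by (simp add: geo_def)
    have "d q a = j" using geo_d[OF G2(1), of 0 j] j G2 ne by (simp add: hd_conv_nth)
    moreover have "j \<noteq> d q b" using j l2 G2(3) ab irrefl ne by (metis diff_Suc_1 last_conv_nth)
    ultimately show False using q j l2 by linarith
  qed
  have w1: "walk E (rev G1)" using G1 walk_rev by (auto simp: geo_def)
  have w2: "walk E G2" using G2 by (auto simp: geo_def)
  have ne1: "G1 \<noteq> []" and ne2: "G2 \<noteq> []" using G1 G2 by (auto simp: geo_def walk_def)
  define W where "W = rev G1 @ G2"
  have sW: "successively E W" unfolding W_def using w1 w2 pq G1 G2 ne1 ne2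
    by (auto simp: walk_iff successively_append_iff last_rev)
  have hdW: "hd W = a" using G1 ne1 by (simp add: W_def hd_rev)
  have lastW: "last W = b" using G2 ne2 by (simp add: W_def)
  have dG1: "distinct G1" using geo_distinct G1 by auto
  have "W \<noteq> []" by (simp add: W_def ne1)
  then obtain W' where W: "W = a # W'" using hdW by (cases W) auto
  have "length W \<ge> 2" using ne1 ne2 unfolding W_def
    by (cases G1; cases G2) auto
  then have W'ne: "W' \<noteq> []" using W by auto
  have aW': "a \<notin> set W'"
  proof -
    obtain G1' where G1': "rev G1 = a # G1'" using ne1 G1 by (cases "rev G1") (auto simp: hd_rev[symmetric])
    have "a \<notin> set G1'" using dG1 G1' by (metis distinct.simps(2) distinct_rev)
    moreover have "W' = G1' @ G2" using W G1' W_def by simp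
    ultimately show ?thesis using aG2 by auto
  qed
  have eaW: "E a (hd W')" and sW': "successively E W'" using sW W W'ne by (auto simp: successively_Cons)
  have lW': "last W' = b" using lastW W W'ne by simp
  have hW'b: "hd W' \<noteq> b"
  proof
    assume hb: "hd W' = b"
    show False
    proof (cases "length G1 = 1")
      case True
      then have "G1 = [a]" using G1 by (cases G1) auto
      then have "p = a" using G1 by simp
      have "W' = G2" using W W_def \<open>G1 = [a]\<close> by simp
      then have "q = b" using hb G2 by simp
      then show False using nab \<open>p = a\<close> by simp
    next
      case False
      define G1' where "G1' = tl (rev G1)"
      have hr: "hd (rev G1) = a" using G1 ne1 by (simp add: hd_rev)
      have "rev G1 \<noteq> []" using ne1 by simp
      then have G1'1: "rev G1 = a # G1'" using hr unfolding G1'_def by (cases "rev G1") auto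
      have "length (rev G1) \<noteq> 1" using False by simp
      then have "G1' \<noteq> []" using G1'1 by auto
      note G1' = G1'1 this
      have "W' = G1' @ G2" using W W_def G1' by simp
      then have "hd W' = hd G1'" using G1'(2) by simp
      moreover have "hd G1' \<in> set G1" using G1' by (metis hd_in_set list.set_intros(2) set_rev)
      ultimately show False using hb bG1 by simp
    qed
  qed
  have wW': "walk E W'" using sW' W'ne by (simp add: walk_iff)
  obtain S where S0: "walk E S" "distinct S" "hd S = hd W'" "last S = last W'" "set S \<subseteq> set W'"
    using simple_path[OF wW'] by blast
  have S: "walk E S" "distinct S" "hd S = hd W'" "last S = b" "set S \<subseteq> set W'"
    using S0 lW' by auto
  have "is_cycle E (a # S)"
  proof -
    have Sne: "S \<noteq> []" using S by (auto simp: walk_def)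
    have "length S \<ge> 2"
    proof (rule ccontr)
      assume "\<not> length S \<ge> 2"
      moreover have "0 < length S" using Sne by simp
      ultimately have "length S = 1" by linarith
      then have "hd S = last S" by (cases S) auto
      then show False using S hW'b by simp
    qed
    moreover have "walk E (a # S)" using S eaW Sne by (auto simp: walk_iff successively_Cons)
    moreover have "distinct (a # S)" using S aW' by auto
    moreover have "E (last (a # S)) (hd (a # S))" using S Sne symE[OF ab] by simp
    ultimately show ?thesis by (auto simp: is_cycle_def)
  qed
  then show False using acyc by blast
qed

lemma cross:
  assumes ab: "E a b" and p: "d p a < d p b" and q: "d q b \<le> d q a"
  shows "d p q = d p a + 1 + d b q"
proof -
  obtain P where P: "geo P" "hd P = p" "last P = q" using dist_ex_geo by blast
  have ne: "P \<noteq> []" using P by (auto simp: geo_def walk_def)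
  define n where "n = length P - 1"
  have ln: "length P = Suc n" using ne n_def by simp
  define L where "L i \<longleftrightarrow> d (P ! i) a < d (P ! i) b" for i
  have L0: "L 0" using P ne p by (simp add: L_def hd_conv_nth)
  have Ln: "\<not> L n" using P ne q ln by (simp add: L_def last_conv_nth)
  define j where "j = (LEAST j. \<not> L j)"
  have nLj: "\<not> L j" unfolding j_def using Ln by (rule LeastI)
  have jn: "j \<le> n" unfolding j_def using Ln by (rule Least_le)
  have j0: "j > 0" using L0 nLj by (cases j) auto
  have Lj1: "L (j - 1)" using not_less_Least[of "j - 1" "\<lambda>j. \<not> L j"] j0 unfolding j_def[symmetric] by auto
  have wP: "walk E P" using P by (simp add: geo_def)
  have e: "E (P ! (j - 1)) (P ! j)" using wP jn j0 ln unfolding walk_def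
    by (metis Suc_diff_1 le_imp_less_Suc)
  have "P ! (j - 1) = a \<and> P ! j = b" 
    by (rule cross_edge[OF ab _ _ e]) (use Lj1 nLj j0 in \<open>auto simp: L_def\<close>)
  moreover have "d p (P ! (j - 1)) = j - 1" using geo_d[OF P(1), of 0 "j - 1"] P ne jn ln
    by (simp add: hd_conv_nth)
  moreover have "d (P ! j) q = n - j" using geo_d[OF P(1), of j n] P ne jn ln
    by (simp add: last_conv_nth)
  moreover have "d p q = n" using P ln by (simp add: geo_def)
  ultimately show ?thesis using j0 jn by auto
qed

end

context tgraph
begin

lemma geo_len: "geo xs \<Longrightarrow> length xs = Suc (d (hd xs) (last xs))"
  by (simp add: geo_def)

lemma geo_walk: "geo xs \<Longrightarrow> walk E xs"
  by (simp add: geo_def)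

lemma geo_ne: "geo xs \<Longrightarrow> xs \<noteq> []"
  by (simp add: geo_def walk_def)

lemma geo_step: "geo xs \<Longrightarrow> Suc i < length xs \<Longrightarrow> E (xs ! i) (xs ! Suc i)"
  by (simp add: geo_def walk_def)

lemma geo_unique:
  assumes gx: "geo xs" and gy: "geo ys" and h: "hd xs = hd ys" and l: "last xs = last ys"
  shows "xs = ys"
proof -
  define m where "m = d (hd xs) (last xs)"
  have lx: "length xs = Suc m" using geo_len[OF gx] m_def by simp
  have ly: "length ys = Suc m" using geo_len[OF gy] m_def h l by simp
  have nx: "xs \<noteq> []" and ny: "ys \<noteq> []" using gx gy geo_ne by auto
  have xm: "xs ! m = last xs" using lx nx by (simp add: last_conv_nth)
  have ym: "ys ! m = last xs" using ly ny l by (simp add: last_conv_nth)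
  have "\<forall>i. i < Suc m \<longrightarrow> xs ! i = ys ! i"
  proof (intro allI)
    fix i show "i < Suc m \<longrightarrow> xs ! i = ys ! i"
    proof (induction i)
      case 0 then show ?case using h nx ny by (simp add: hd_conv_nth)
    next
      case (Suc i)
      show ?case
      proof
        assume si: "Suc i < Suc m"
        define v where "v = xs ! i"
        have vy: "ys ! i = v" using Suc si v_def by simp
        define w1 where "w1 = xs ! Suc i"
        define w2 where "w2 = ys ! Suc i"
        define y where "y = last xs"
        have e1: "E v w1" using geo_step[OF gx, of i] si lx v_def w1_def by simp
        have e2: "E v w2" using geo_step[OF gy, of i] si ly vy w2_def by simp
        have d1: "d w1 y = m - Suc i" using geo_d[OF gx, of "Suc i" m] si lx xm w1_def y_def by simp
        have d2: "d w2 y = m - Suc i" using geo_d[OF gy, of "Suc i" m] si ly ym w2_def y_def by simp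
        have dv: "d v y = m - i" using geo_d[OF gx, of i m] si lx xm v_def y_def by simp
        show "xs ! Suc i = ys ! Suc i"
        proof (rule ccontr)
          assume ne: "xs ! Suc i \<noteq> ys ! Suc i"
          then have w12: "w1 \<noteq> w2" by (simp add: w1_def w2_def)
          have dw2v: "d w2 v = 1" using dE[OF symE[OF e2]] .
          show False
          proof (cases "d w2 v < d w2 w1")
            case True
            have "d y w1 \<le> d y v" using d1 dv dsym[of y w1] dsym[of y v] by simp
            then have "d w2 y = d w2 v + 1 + d w1 y" using cross[OF e1 True] by simp
            then show False using d2 d1 dw2v by simp
          next
            case False
            then have "d w2 w1 \<le> 1" using dw2v by simp
            moreover have "d w2 w1 \<noteq> 0" using w12 by simp
            ultimately have e3: "E w2 w1" using d1E by (metis le_antisym less_one not_le)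
            have "is_cycle E [v, w1, w2]"
              unfolding is_cycle_def walk_def
              using e1 symE[OF e3] symE[OF e2] w12 irrefl e1 e2
              by (auto simp: nth_Cons split: nat.splits)
            then show False using acyc by blast
          qed
        qed
      qed
    qed
  qed
  then show ?thesis using lx ly by (intro nth_equalityI) auto
qed

lemma geod_props: "geo (geod E x y) \<and> hd (geod E x y) = x \<and> last (geod E x y) = y"
proof -
  have ex: "\<exists>ws. walk E ws \<and> hd ws = x \<and> last ws = y \<and> length ws = Suc (d x y)"
    by (rule dist_ex)
  have "\<exists>!ws. walk E ws \<and> hd ws = x \<and> last ws = y \<and> length ws = Suc (d x y)"
  proof (rule ex_ex1I[OF ex])
    fix ws vs assume a: "walk E ws \<and> hd ws = x \<and> last ws = y \<and> length ws = Suc (d x y)"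
      "walk E vs \<and> hd vs = x \<and> last vs = y \<and> length vs = Suc (d x y)"
    then show "ws = vs" using geo_unique[of ws vs] by (auto simp: geo_def)
  qed
  then have "walk E (geod E x y) \<and> hd (geod E x y) = x \<and> last (geod E x y) = y \<and> length (geod E x y) = Suc (d x y)"
    unfolding geod_def by (rule theI')
  then show ?thesis by (auto simp: geo_def)
qed

lemma geod_len: "length (geod E x y) = Suc (d x y)"
  using geod_props[of x y] geo_len by auto

lemma geod_0: "geod E x y ! 0 = x"
  using geod_props[of x y] geo_ne by (metis hd_conv_nth)

lemma geod_m: "geod E x y ! d x y = y"
  using geod_props[of x y] geo_ne geod_len by (metis diff_Suc_1 last_conv_nth)

lemma geod_d: "i \<le> j \<Longrightarrow> j \<le> d x y \<Longrightarrow> d (geod E x y ! i) (geod E x y ! j) = j - i"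
  using geod_props[of x y] geo_d geod_len by (metis le_imp_less_Suc)

lemma geod_step: "Suc i \<le> d x y \<Longrightarrow> E (geod E x y ! i) (geod E x y ! Suc i)"
  using geod_props[of x y] geo_step geod_len by (metis Suc_le_mono le_imp_less_Suc)

lemma qc_local:
  assumes g: "geo xs" and j: "0 < j" "Suc j < length xs"
  shows "d u (xs ! j) < max (d u (xs ! (j - 1))) (d u (xs ! Suc j))"
proof (rule ccontr)
  assume "\<not> ?thesis"
  then have f1: "d u (xs ! (j - 1)) \<le> d u (xs ! j)" and f2: "d u (xs ! Suc j) \<le> d u (xs ! j)" by auto
  have eab: "E (xs ! j) (xs ! Suc j)" using geo_step[OF g j(2)] .
  have pa: "d (xs ! (j - 1)) (xs ! j) = 1" using geo_d[OF g, of "j - 1" j] j by simp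
  have pb: "d (xs ! (j - 1)) (xs ! Suc j) = 2" using geo_d[OF g, of "j - 1" "Suc j"] j by simp
  have "d u (xs ! Suc j) \<le> d u (xs ! j)" using f2 .
  then have "d (xs ! (j - 1)) u = d (xs ! (j - 1)) (xs ! j) + 1 + d (xs ! Suc j) u"
    using cross[OF eab, of "xs ! (j - 1)" u] pa pb by simp
  moreover have "d u (xs ! j) \<le> d u (xs ! Suc j) + 1" using dE_le[OF eab] .
  ultimately show False using f1 pa dsym[of u "xs ! (j - 1)"] dsym[of u "xs ! Suc j"] by linarith
qed

lemma qc:
  assumes g: "geo xs" and ijl: "i < j" "j < l" "l < length xs"
  shows "d u (xs ! j) < max (d u (xs ! i)) (d u (xs ! l))"
proof (rule ccontr)
  assume "\<not> ?thesis"
  then have fi: "d u (xs ! i) \<le> d u (xs ! j)" and fl: "d u (xs ! l) \<le> d u (xs ! j)" by auto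
  define f where "f s = d u (xs ! s)" for s
  define S where "S = {i<..<l}"
  have fin: "finite (f ` S)" and ne: "f ` S \<noteq> {}" using ijl by (auto simp: S_def)
  obtain t where t: "t \<in> S" "f t = Max (f ` S)" using Max_in[OF fin ne] by auto
  have tmax: "s \<in> S \<Longrightarrow> f s \<le> f t" for s using t fin by simp
  have ftj: "f j \<le> f t" using tmax ijl by (simp add: S_def)
  have "f (t - 1) \<le> f t"
  proof (cases "t - 1 = i")
    case True then show ?thesis using fi ftj f_def by simp
  next
    case False then have "t - 1 \<in> S" using t by (auto simp: S_def)
    then show ?thesis using tmax by simp
  qed
  moreover have "f (Suc t) \<le> f t"
  proof (cases "Suc t = l")
    case True then show ?thesis using fl ftj f_def by simp
  next
    case False then have "Suc t \<in> S" using t by (auto simp: S_def)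
    then show ?thesis using tmax by simp
  qed
  moreover have "f t < max (f (t - 1)) (f (Suc t))"
    unfolding f_def by (rule qc_local[OF g]) (use t ijl in \<open>auto simp: S_def\<close>)
  ultimately show False by linarith
qed

lemma ball_finite:
  assumes bv: "bounded_valence E"
  shows "finite (ball_k E r x)"
proof (induction r)
  case 0
  have "ball_k E 0 x = {x}" by (auto simp: ball_k_def)
  then show ?case by simp
next
  case (Suc r)
  have nf: "finite {w. E u w}" for u using bv by (auto simp: bounded_valence_def)
  have "ball_k E (Suc r) x \<subseteq> ball_k E r x \<union> (\<Union>u\<in>ball_k E r x. {w. E u w})"
  proof
    fix w assume "w \<in> ball_k E (Suc r) x"
    then have "d x w \<le> Suc r" by (simp add: ball_k_def)
    then consider "d x w \<le> r" | "d x w = Suc r" by linarith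
    then show "w \<in> ball_k E r x \<union> (\<Union>u\<in>ball_k E r x. {w. E u w})"
    proof cases
      case 1 then show ?thesis by (simp add: ball_k_def)
    next
      case 2
      have "E (geod E x w ! r) (geod E x w ! Suc r)" using geod_step[of r x w] 2 by simp
      moreover have "geod E x w ! Suc r = w" using geod_m[of x w] 2 by simp
      moreover have "d x (geod E x w ! r) = r" using geod_d[of 0 r x w] 2 geod_0 by simp
      ultimately show ?thesis by (auto simp: ball_k_def)
    qed
  qed
  moreover have "finite (ball_k E r x \<union> (\<Union>u\<in>ball_k E r x. {w. E u w}))" using Suc nf by auto
  ultimately show ?case by (rule finite_subset)
qed

end

definition Lset :: "nat \<Rightarrow> 'v set \<Rightarrow> 'v list set" where
  "Lset n X = {ws. length ws = n \<and> set ws \<subseteq> X}"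

lemma Lset_finite: "finite X \<Longrightarrow> finite (Lset n X)"
  unfolding Lset_def using finite_lists_length_eq[of X n] by (simp add: conj_commute)

lemma Lset_0: "Lset 0 X = {[]}" by (auto simp: Lset_def)

lemma Lset_Suc: "Lset (Suc n) X = (\<lambda>(c, ws). c # ws) ` (X \<times> Lset n X)"
proof
  show "Lset (Suc n) X \<subseteq> (\<lambda>(c, ws). c # ws) ` (X \<times> Lset n X)"
  proof
    fix ws assume "ws \<in> Lset (Suc n) X"
    then obtain c ws' where "ws = c # ws'" "c \<in> X" "ws' \<in> Lset n X"
      by (cases ws) (auto simp: Lset_def)
    then show "ws \<in> (\<lambda>(c, ws). c # ws) ` (X \<times> Lset n X)" by force
  qed
qed (auto simp: Lset_def)

lemma sum_Lset_Suc:
  assumes "finite X"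
  shows "sum g (Lset (Suc n) X) = (\<Sum>c\<in>X. \<Sum>ws\<in>Lset n X. g (c # ws))"
proof -
  have inj: "inj_on (\<lambda>(c, ws). c # ws) (X \<times> Lset n X)" by (auto simp: inj_on_def)
  have "sum g (Lset (Suc n) X) = sum (g \<circ> (\<lambda>(c, ws). c # ws)) (X \<times> Lset n X)"
    unfolding Lset_Suc by (rule sum.reindex[OF inj])
  also have "\<dots> = (\<Sum>c\<in>X. \<Sum>ws\<in>Lset n X. g (c # ws))"
    unfolding sum.cartesian_product' comp_def by (simp add: case_prod_beta)
  finally show ?thesis .
qed

locale kctx = tgraph E for E :: "'v \<Rightarrow> 'v \<Rightarrow> bool" +
  fixes p :: "'v \<Rightarrow> 'v \<Rightarrow> real" and k :: nat
  assumes bv: "bounded_valence E"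
    and kernel: "transition_kernel p"
    and range: "\<forall>x y. gdist E x y > k \<longrightarrow> p x y = 0"
begin

abbreviation N where "N a \<equiv> ball_k E k a"
abbreviation P where "P n \<Omega> a b \<equiv> pn p n \<Omega> a b"

lemma p_nonneg: "0 \<le> p x y" using kernel by (simp add: transition_kernel_def)

lemma p_zero: "y \<notin> N x \<Longrightarrow> p x y = 0"
  using range by (auto simp: ball_k_def)

lemma N_finite: "finite (N a)" using ball_finite[OF bv] .

lemma ball_fin: "finite (ball_k E r a)" using ball_finite[OF bv] .

lemma p_sum_le1: "finite F \<Longrightarrow> (\<Sum>c\<in>F. p a c) \<le> 1"
proof -
  assume F: "finite F"
  have "(p a has_sum 1) UNIV" using kernel by (simp add: transition_kernel_def)
  then show ?thesis
    by (rule has_sum_mono_neutral[OF has_sum_finite[OF F]]) (auto simp: p_nonneg)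
qed

definition wt :: "'v \<Rightarrow> 'v \<Rightarrow> 'v list \<Rightarrow> real" where
  "wt a b ws = prod_list (map2 p (a # ws) (ws @ [b]))"

lemma wt_Cons: "wt a b (c # ws) = p a c * wt c b ws"
  by (simp add: wt_def)

lemma wt_Nil: "wt a b [] = p a b"
  by (simp add: wt_def)

lemma wt_support: "wt a b ws \<noteq> 0 \<Longrightarrow> set ws \<subseteq> ball_k E (length ws * k) a"
proof (induction ws arbitrary: a)
  case Nil then show ?case by simp
next
  case (Cons c ws)
  have pc: "p a c \<noteq> 0" and wc: "wt c b ws \<noteq> 0" using Cons.prems by (auto simp: wt_Cons)
  have dac: "d a c \<le> k" using pc range by (meson not_le)
  have IH: "set ws \<subseteq> ball_k E (length ws * k) c" using Cons.IH[OF wc] .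
  show ?case
  proof
    fix w assume "w \<in> set (c # ws)"
    then consider "w = c" | "w \<in> set ws" by auto
    then show "w \<in> ball_k E (length (c # ws) * k) a"
    proof cases
      case 1 then show ?thesis using dac by (auto simp: ball_k_def)
    next
      case 2
      then have "d c w \<le> length ws * k" using IH by (auto simp: ball_k_def)
      then show ?thesis using dac tri[of a w c] by (auto simp: ball_k_def)
    qed
  qed
qed

lemma pn_Suc_sum:
  assumes Y: "finite Y" "Y \<subseteq> \<Omega>" "\<Omega> \<inter> ball_k E (n * k) a \<subseteq> Y"
  shows "P (Suc n) \<Omega> a b = (\<Sum>ws\<in>Lset n Y. wt a b ws)"
proof -
  have "P (Suc n) \<Omega> a b = infsum (wt a b) (Lset n \<Omega>)"
    unfolding pn_def Lset_def wt_def[abs_def] by simp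
  also have "\<dots> = infsum (wt a b) (Lset n Y)"
  proof (rule infsum_cong_neutral)
    fix ws assume ws: "ws \<in> Lset n \<Omega> - Lset n Y"
    show "wt a b ws = 0"
    proof (rule ccontr)
      assume "wt a b ws \<noteq> 0"
      then have "set ws \<subseteq> ball_k E (n * k) a" using wt_support ws by (auto simp: Lset_def)
      then show False using ws Y by (auto simp: Lset_def)
    qed
  qed (use Y in \<open>auto simp: Lset_def\<close>)
  also have "\<dots> = (\<Sum>ws\<in>Lset n Y. wt a b ws)" using Lset_finite[OF Y(1)] by simp
  finally show ?thesis .
qed

lemma pn_0: "P 0 \<Omega> a b = (if a = b then 1 else 0)"
  by (simp add: pn_def)

lemma pn_1: "P (Suc 0) \<Omega> a b = p a b"
proof -
  have "{ws. length ws = 0 \<and> set ws \<subseteq> \<Omega>} = {[]}" by auto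
  then show ?thesis by (simp add: pn_def)
qed

lemma pn_rec: "P (Suc (Suc n)) \<Omega> a b = (\<Sum>c\<in>\<Omega> \<inter> N a. p a c * P (Suc n) \<Omega> c b)"
proof -
  define X where "X = \<Omega> \<inter> ball_k E (Suc n * k) a"
  have fX: "finite X" using ball_fin X_def by simp
  have "P (Suc (Suc n)) \<Omega> a b = (\<Sum>ws\<in>Lset (Suc n) X. wt a b ws)"
    by (rule pn_Suc_sum) (use fX in \<open>auto simp: X_def\<close>)
  also have "\<dots> = (\<Sum>c\<in>X. \<Sum>ws\<in>Lset n X. wt a b (c # ws))"
    by (rule sum_Lset_Suc[OF fX])
  also have "\<dots> = (\<Sum>c\<in>X. p a c * (\<Sum>ws\<in>Lset n X. wt c b ws))"
    by (simp add: wt_Cons sum_distrib_left)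
  also have "\<dots> = (\<Sum>c\<in>X. p a c * P (Suc n) \<Omega> c b)"
  proof (rule sum.cong[OF refl])
    fix c assume c: "c \<in> X"
    show "p a c * (\<Sum>ws\<in>Lset n X. wt c b ws) = p a c * P (Suc n) \<Omega> c b"
    proof (cases "c \<in> N a")
      case True
      have "\<Omega> \<inter> ball_k E (n * k) c \<subseteq> X"
      proof
        fix w assume "w \<in> \<Omega> \<inter> ball_k E (n * k) c"
        moreover have "d a c \<le> k" using True by (simp add: ball_k_def)
        ultimately show "w \<in> X" using tri[of a w c] by (auto simp: X_def ball_k_def)
      qed
      then have "P (Suc n) \<Omega> c b = (\<Sum>ws\<in>Lset n X. wt c b ws)"
        by (intro pn_Suc_sum) (use fX in \<open>auto simp: X_def\<close>)
      then show ?thesis by simp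
    next
      case False then show ?thesis using p_zero by simp
    qed
  qed
  also have "\<dots> = (\<Sum>c\<in>\<Omega> \<inter> N a. p a c * P (Suc n) \<Omega> c b)"
  proof (rule sum.mono_neutral_right[OF fX])
    show "\<Omega> \<inter> N a \<subseteq> X" by (auto simp: X_def ball_k_def)
  qed (use p_zero in \<open>auto simp: X_def\<close>)
  finally show ?thesis .
qed

lemma pn_bounds: "0 \<le> P n \<Omega> a b \<and> P n \<Omega> a b \<le> 1"
proof (cases n)
  case 0 then show ?thesis by (simp add: pn_0)
next
  case (Suc m)
  have "\<forall>a. 0 \<le> P (Suc m) \<Omega> a b \<and> P (Suc m) \<Omega> a b \<le> 1"
  proof (induction m)
    case 0 then show ?case using p_nonneg p_sum_le1[of "{b}"] by (simp add: pn_1)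
  next
    case (Suc m)
    show ?case
    proof
      fix a
      have "0 \<le> (\<Sum>c\<in>\<Omega> \<inter> N a. p a c * P (Suc m) \<Omega> c b)"
        using Suc p_nonneg by (intro sum_nonneg) auto
      moreover have "(\<Sum>c\<in>\<Omega> \<inter> N a. p a c * P (Suc m) \<Omega> c b) \<le> (\<Sum>c\<in>\<Omega> \<inter> N a. p a c)"
        using Suc p_nonneg by (intro sum_mono) (simp add: mult_left_le)
      moreover have "(\<Sum>c\<in>\<Omega> \<inter> N a. p a c) \<le> 1" using p_sum_le1 N_finite by simp
      ultimately show "0 \<le> P (Suc (Suc m)) \<Omega> a b \<and> P (Suc (Suc m)) \<Omega> a b \<le> 1"
        by (simp add: pn_rec)
    qed
  qed
  then show ?thesis using Suc by simp
qed

lemma pn_cong: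
  assumes "Inv a"
    and "\<And>c c'. Inv c \<Longrightarrow> c' \<in> N c \<Longrightarrow> (c' \<in> \<Omega>1 \<longleftrightarrow> c' \<in> \<Omega>2) \<and> (c' \<in> \<Omega>1 \<longrightarrow> Inv c')"
  shows "P n \<Omega>1 a b = P n \<Omega>2 a b"
proof (cases n)
  case 0 then show ?thesis by (simp add: pn_0)
next
  case (Suc m)
  have "\<forall>a. Inv a \<longrightarrow> P (Suc m) \<Omega>1 a b = P (Suc m) \<Omega>2 a b"
  proof (induction m)
    case 0 then show ?case by (simp add: pn_1)
  next
    case (Suc m)
    show ?case
    proof (intro allI impI)
      fix a assume a: "Inv a"
      have eq: "\<Omega>1 \<inter> N a = \<Omega>2 \<inter> N a" using assms(2)[OF a] by blast
      show "P (Suc (Suc m)) \<Omega>1 a b = P (Suc (Suc m)) \<Omega>2 a b"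
        unfolding pn_rec eq
        using Suc assms(2)[OF a] eq by (intro sum.cong) auto
    qed
  qed
  then show ?thesis using Suc assms(1) by simp
qed

lemma pn_zero:
  assumes "Inv a"
    and "\<And>c. Inv c \<Longrightarrow> c \<noteq> b \<and> p c b = 0 \<and> (\<forall>c'\<in>\<Omega> \<inter> N c. Inv c')"
  shows "P n \<Omega> a b = 0"
proof (cases n)
  case 0 then show ?thesis using assms by (simp add: pn_0)
next
  case (Suc m)
  have "\<forall>a. Inv a \<longrightarrow> P (Suc m) \<Omega> a b = 0"
  proof (induction m)
    case 0 then show ?case using assms(2) by (simp add: pn_1)
  next
    case (Suc m)
    then show ?case using assms(2) by (auto simp: pn_rec intro!: sum.neutral)
  qed
  then show ?thesis using Suc assms(1) by simp
qed

end

context kctx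
begin

lemma gi_coeff:
  assumes A: "finite A" and a: "a \<notin> A" and b: "b \<notin> \<Omega>"
  shows "P n \<Omega> a b = P n (\<Omega> - A) a b
     + (\<Sum>c'\<in>A \<inter> \<Omega>. \<Sum>i\<le>n. P i (\<Omega> - A) a c' * P (n - i) \<Omega> c' b)"
proof -
  define B where "B = \<Omega> - A"
  define T where "T c m = (\<Sum>c'\<in>A \<inter> \<Omega>. \<Sum>i\<le>m. P i B c c' * P (m - i) \<Omega> c' b)" for c m
  have fAO: "finite (A \<inter> \<Omega>)" using A by simp
  have P0: "c \<notin> A \<Longrightarrow> c' \<in> A \<Longrightarrow> P 0 B c c' = 0" for c c' by (auto simp: pn_0)
  have P0': "c' \<in> \<Omega> \<Longrightarrow> P 0 \<Omega> c' b = 0" for c' using b by (auto simp: pn_0)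
  have base0: "P 0 \<Omega> a b = P 0 B a b + T a 0"
    unfolding T_def using P0[OF a] by (simp add: pn_0)
  have Tshift: "T c (Suc m) = (\<Sum>c'\<in>A \<inter> \<Omega>. \<Sum>j\<le>m. P (Suc j) B c c' * P (m - j) \<Omega> c' b)"
    if "c \<notin> A" for c m
    unfolding T_def by (rule sum.cong[OF refl]) (subst sum.atMost_Suc_shift, simp add: P0[OF that])
  have main: "\<forall>a. a \<notin> A \<longrightarrow> P (Suc m) \<Omega> a b = P (Suc m) B a b + T a (Suc m)" for m
  proof (induction m)
    case 0
    show ?case
    proof (intro allI impI)
      fix a assume a: "a \<notin> A"
      have "T a (Suc 0) = 0" unfolding Tshift[OF a] using P0' by (simp add: pn_0)
      then show "P (Suc 0) \<Omega> a b = P (Suc 0) B a b + T a (Suc 0)" by (simp add: pn_1)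
    qed
  next
    case (Suc m)
    show ?case
    proof (intro allI impI)
      fix a assume a: "a \<notin> A"
      have fBN: "finite (B \<inter> N a)" and fAN: "finite (A \<inter> \<Omega> \<inter> N a)" using N_finite by auto
      have split: "\<Omega> \<inter> N a = (B \<inter> N a) \<union> (A \<inter> \<Omega> \<inter> N a)" by (auto simp: B_def)
      have "P (Suc (Suc m)) \<Omega> a b
          = (\<Sum>c\<in>B \<inter> N a. p a c * P (Suc m) \<Omega> c b) + (\<Sum>c\<in>A \<inter> \<Omega> \<inter> N a. p a c * P (Suc m) \<Omega> c b)"
        unfolding pn_rec split by (rule sum.union_disjoint[OF fBN fAN]) (auto simp: B_def)
      also have "(\<Sum>c\<in>B \<inter> N a. p a c * P (Suc m) \<Omega> c b)
          = (\<Sum>c\<in>B \<inter> N a. p a c * (P (Suc m) B c b + T c (Suc m)))"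
        using Suc by (intro sum.cong) (auto simp: B_def)
      also have "\<dots> = P (Suc (Suc m)) B a b + (\<Sum>c\<in>B \<inter> N a. p a c * T c (Suc m))"
        by (simp add: pn_rec distrib_left sum.distrib)
      also have "(\<Sum>c\<in>A \<inter> \<Omega> \<inter> N a. p a c * P (Suc m) \<Omega> c b) = (\<Sum>c'\<in>A \<inter> \<Omega>. p a c' * P (Suc m) \<Omega> c' b)"
        by (rule sum.mono_neutral_left[OF fAO]) (auto simp: p_zero)
      finally have L: "P (Suc (Suc m)) \<Omega> a b = P (Suc (Suc m)) B a b + (\<Sum>c\<in>B \<inter> N a. p a c * T c (Suc m))
            + (\<Sum>c'\<in>A \<inter> \<Omega>. p a c' * P (Suc m) \<Omega> c' b)" .
      have "(\<Sum>c\<in>B \<inter> N a. p a c * T c (Suc m))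
          = (\<Sum>c\<in>B \<inter> N a. p a c * (\<Sum>c'\<in>A \<inter> \<Omega>. \<Sum>j\<le>m. P (Suc j) B c c' * P (m - j) \<Omega> c' b))"
        using Tshift by (intro sum.cong) (auto simp: B_def)
      also have "\<dots> = (\<Sum>c\<in>B \<inter> N a. \<Sum>c'\<in>A \<inter> \<Omega>. \<Sum>j\<le>m. p a c * P (Suc j) B c c' * P (m - j) \<Omega> c' b)"
        by (simp add: sum_distrib_left mult.assoc)
      also have "\<dots> = (\<Sum>c'\<in>A \<inter> \<Omega>. \<Sum>c\<in>B \<inter> N a. \<Sum>j\<le>m. p a c * P (Suc j) B c c' * P (m - j) \<Omega> c' b)"
        by (rule sum.swap)
      also have "\<dots> = (\<Sum>c'\<in>A \<inter> \<Omega>. \<Sum>j\<le>m. \<Sum>c\<in>B \<inter> N a. p a c * P (Suc j) B c c' * P (m - j) \<Omega> c' b)"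
        by (rule sum.cong[OF refl]) (rule sum.swap)
      also have "\<dots> = (\<Sum>c'\<in>A \<inter> \<Omega>. \<Sum>j\<le>m. P (Suc (Suc j)) B a c' * P (m - j) \<Omega> c' b)"
        by (simp add: pn_rec sum_distrib_right)
      finally have M: "(\<Sum>c\<in>B \<inter> N a. p a c * T c (Suc m))
           = (\<Sum>c'\<in>A \<inter> \<Omega>. \<Sum>j\<le>m. P (Suc (Suc j)) B a c' * P (m - j) \<Omega> c' b)" .
      have R: "T a (Suc (Suc m)) = (\<Sum>c'\<in>A \<inter> \<Omega>. p a c' * P (Suc m) \<Omega> c' b)
            + (\<Sum>c'\<in>A \<inter> \<Omega>. \<Sum>j\<le>m. P (Suc (Suc j)) B a c' * P (m - j) \<Omega> c' b)"
      proof -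
        have "T a (Suc (Suc m)) = (\<Sum>c'\<in>A \<inter> \<Omega>. p a c' * P (Suc m) \<Omega> c' b
            + (\<Sum>j\<le>m. P (Suc (Suc j)) B a c' * P (m - j) \<Omega> c' b))"
          unfolding Tshift[OF a] by (rule sum.cong[OF refl]) (subst sum.atMost_Suc_shift, simp add: pn_1)
        then show ?thesis by (simp add: sum.distrib)
      qed
      show "P (Suc (Suc m)) \<Omega> a b = P (Suc (Suc m)) B a b + T a (Suc (Suc m))"
        using L M R by linarith
    qed
  qed
  show ?thesis
  proof (cases n)
    case 0 then show ?thesis using base0 by (simp add: B_def T_def)
  next
    case (Suc m) then show ?thesis using main[of m] a by (simp add: B_def T_def)
  qed
qed

abbreviation G where "G z a b \<Omega> \<equiv> Gz p z a b \<Omega>"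

lemma G_summable_norm:
  assumes z: "norm z < 1"
  shows "summable (\<lambda>n. norm (complex_of_real (P n \<Omega> a b) * z ^ n))"
proof (rule summable_comparison_test)
  show "summable (\<lambda>n. norm z ^ n)" using z by (simp add: summable_geometric)
  show "\<exists>N. \<forall>n\<ge>N. norm (norm (complex_of_real (P n \<Omega> a b) * z ^ n)) \<le> norm z ^ n"
  proof (intro exI[of _ 0] allI impI)
    fix n :: nat
    have "norm (norm (complex_of_real (P n \<Omega> a b) * z ^ n)) = \<bar>P n \<Omega> a b\<bar> * norm z ^ n"
      by (simp add: norm_mult norm_power)
    also have "\<dots> \<le> norm z ^ n"
      using pn_bounds[of n \<Omega> a b] by (intro mult_left_le_one_le) auto
    finally show "norm (norm (complex_of_real (P n \<Omega> a b) * z ^ n)) \<le> norm z ^ n" .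
  qed
qed

lemma G_sums:
  assumes z: "norm z < 1"
  shows "(\<lambda>n. complex_of_real (P n \<Omega> a b) * z ^ n) sums G z a b \<Omega>"
  unfolding Gz_def using summable_norm_cancel[OF G_summable_norm[OF z]] by (rule summable_sums)

lemma G_prod_sums:
  assumes z: "norm z < 1"
  shows "(\<lambda>n. complex_of_real (\<Sum>i\<le>n. P i \<Omega>1 a c * P (n - i) \<Omega>2 c b) * z ^ n)
           sums (G z a c \<Omega>1 * G z c b \<Omega>2)"
proof -
  have "(\<lambda>n. \<Sum>i\<le>n. (complex_of_real (P i \<Omega>1 a c) * z ^ i) * (complex_of_real (P (n - i) \<Omega>2 c b) * z ^ (n - i)))
          sums (G z a c \<Omega>1 * G z c b \<Omega>2)"
    unfolding Gz_def by (rule Cauchy_product_sums[OF G_summable_norm[OF z] G_summable_norm[OF z]])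
  moreover have "(\<Sum>i\<le>n. (complex_of_real (P i \<Omega>1 a c) * z ^ i) * (complex_of_real (P (n - i) \<Omega>2 c b) * z ^ (n - i)))
      = complex_of_real (\<Sum>i\<le>n. P i \<Omega>1 a c * P (n - i) \<Omega>2 c b) * z ^ n" for n
  proof -
    have "(\<Sum>i\<le>n. (complex_of_real (P i \<Omega>1 a c) * z ^ i) * (complex_of_real (P (n - i) \<Omega>2 c b) * z ^ (n - i)))
        = (\<Sum>i\<le>n. complex_of_real (P i \<Omega>1 a c * P (n - i) \<Omega>2 c b) * z ^ n)"
    proof (rule sum.cong[OF refl])
      fix i assume "i \<in> {..n}"
      then have "z ^ i * z ^ (n - i) = z ^ n" by (simp add: power_add[symmetric])
      have "(complex_of_real (P i \<Omega>1 a c) * z ^ i) * (complex_of_real (P (n - i) \<Omega>2 c b) * z ^ (n - i))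
          = complex_of_real (P i \<Omega>1 a c * P (n - i) \<Omega>2 c b) * (z ^ i * z ^ (n - i))"
        by (simp only: of_real_mult mult_ac)
      then show "(complex_of_real (P i \<Omega>1 a c) * z ^ i) * (complex_of_real (P (n - i) \<Omega>2 c b) * z ^ (n - i))
          = complex_of_real (P i \<Omega>1 a c * P (n - i) \<Omega>2 c b) * z ^ n"
        using \<open>z ^ i * z ^ (n - i) = z ^ n\<close> by simp
    qed
    also have "\<dots> = complex_of_real (\<Sum>i\<le>n. P i \<Omega>1 a c * P (n - i) \<Omega>2 c b) * z ^ n"
      by (simp only: of_real_sum sum_distrib_right)
    finally show ?thesis .
  qed
  ultimately show ?thesis by simp
qed

lemma gi_G:
  assumes z: "norm z < 1" and A: "finite A" and a: "a \<notin> A" and b: "b \<notin> \<Omega>"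
  shows "G z a b \<Omega> = G z a b (\<Omega> - A) + (\<Sum>c'\<in>A \<inter> \<Omega>. G z a c' (\<Omega> - A) * G z c' b \<Omega>)"
proof -
  have "(\<lambda>n. complex_of_real (P n (\<Omega> - A) a b) * z ^ n
        + (\<Sum>c'\<in>A \<inter> \<Omega>. complex_of_real (\<Sum>i\<le>n. P i (\<Omega> - A) a c' * P (n - i) \<Omega> c' b) * z ^ n))
        sums (G z a b (\<Omega> - A) + (\<Sum>c'\<in>A \<inter> \<Omega>. G z a c' (\<Omega> - A) * G z c' b \<Omega>))"
    by (intro sums_add G_sums[OF z] sums_sum G_prod_sums[OF z])
  moreover have "complex_of_real (P n (\<Omega> - A) a b) * z ^ n
        + (\<Sum>c'\<in>A \<inter> \<Omega>. complex_of_real (\<Sum>i\<le>n. P i (\<Omega> - A) a c' * P (n - i) \<Omega> c' b) * z ^ n)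
      = complex_of_real (P n \<Omega> a b) * z ^ n" for n
    unfolding gi_coeff[OF A a b, of n] by (simp only: of_real_add of_real_sum distrib_right sum_distrib_right)
  ultimately have "(\<lambda>n. complex_of_real (P n \<Omega> a b) * z ^ n)
      sums (G z a b (\<Omega> - A) + (\<Sum>c'\<in>A \<inter> \<Omega>. G z a c' (\<Omega> - A) * G z c' b \<Omega>))" by simp
  then show ?thesis using G_sums[OF z] sums_unique2 by blast
qed

lemma first_step_G:
  assumes z: "norm z < 1" and b: "b \<notin> \<Omega>" and ab: "a \<noteq> b"
  shows "G z a b \<Omega> = z * complex_of_real (p a b) + (\<Sum>c\<in>\<Omega> \<inter> N a. z * complex_of_real (p a c) * G z c b \<Omega>)"
proof -
  have coef: "P (Suc n) \<Omega> a b = (if n = 0 then p a b else 0) + (\<Sum>c\<in>\<Omega> \<inter> N a. p a c * P n \<Omega> c b)" for n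
  proof (cases n)
    case 0
    have "(\<Sum>c\<in>\<Omega> \<inter> N a. p a c * P n \<Omega> c b) = 0" using 0 b by (intro sum.neutral) (auto simp: pn_0)
    then show ?thesis using 0 by (simp add: pn_1)
  next
    case (Suc m) then show ?thesis by (simp add: pn_rec)
  qed
  have s1: "(\<lambda>n. complex_of_real (if n = 0 then p a b else 0) * z ^ n) sums complex_of_real (p a b)"
  proof -
    have "(\<lambda>n. complex_of_real (if n = 0 then p a b else 0) * z ^ n) = (\<lambda>n. if n = 0 then complex_of_real (p a b) else 0)"
      by (rule ext) simp
    then show ?thesis using sums_single[of 0 "\<lambda>_. complex_of_real (p a b)"] by simp
  qed
  have s2: "(\<lambda>n. \<Sum>c\<in>\<Omega> \<inter> N a. complex_of_real (p a c) * (complex_of_real (P n \<Omega> c b) * z ^ n))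
      sums (\<Sum>c\<in>\<Omega> \<inter> N a. complex_of_real (p a c) * G z c b \<Omega>)"
    by (intro sums_sum sums_mult G_sums[OF z])
  have "(\<lambda>n. z * (complex_of_real (if n = 0 then p a b else 0) * z ^ n
         + (\<Sum>c\<in>\<Omega> \<inter> N a. complex_of_real (p a c) * (complex_of_real (P n \<Omega> c b) * z ^ n))))
      sums (z * (complex_of_real (p a b) + (\<Sum>c\<in>\<Omega> \<inter> N a. complex_of_real (p a c) * G z c b \<Omega>)))"
    by (intro sums_mult sums_add s1 s2)
  moreover have "z * (complex_of_real (if n = 0 then p a b else 0) * z ^ n
         + (\<Sum>c\<in>\<Omega> \<inter> N a. complex_of_real (p a c) * (complex_of_real (P n \<Omega> c b) * z ^ n)))
      = complex_of_real (P (Suc n) \<Omega> a b) * z ^ Suc n" for n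
    unfolding coef by (simp only: of_real_add of_real_sum of_real_mult distrib_right distrib_left
      sum_distrib_right sum_distrib_left power_Suc mult_ac)
  ultimately have "(\<lambda>n. complex_of_real (P (Suc n) \<Omega> a b) * z ^ Suc n)
      sums (z * (complex_of_real (p a b) + (\<Sum>c\<in>\<Omega> \<inter> N a. complex_of_real (p a c) * G z c b \<Omega>)))"
    by simp
  then have "(\<lambda>n. complex_of_real (P n \<Omega> a b) * z ^ n)
      sums (z * (complex_of_real (p a b) + (\<Sum>c\<in>\<Omega> \<inter> N a. complex_of_real (p a c) * G z c b \<Omega>))
            + complex_of_real (P 0 \<Omega> a b) * z ^ 0)"
    by (subst sums_Suc_iff[symmetric])
  moreover have "P 0 \<Omega> a b = 0" using ab by (simp add: pn_0)
  ultimately have "G z a b \<Omega> = z * (complex_of_real (p a b) + (\<Sum>c\<in>\<Omega> \<inter> N a. complex_of_real (p a c) * G z c b \<Omega>))"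
    using sums_unique2[OF G_sums[OF z]] by simp
  then show ?thesis by (simp add: distrib_left sum_distrib_left mult.assoc)
qed

end

locale pctx = kctx E p k for E :: "'v \<Rightarrow> 'v \<Rightarrow> bool" and p k +
  fixes x y :: 'v
begin

abbreviation X where "X i \<equiv> geod E x y ! i"
abbreviation m where "m \<equiv> d x y"
abbreviation By where "By \<equiv> ball_k E k y"

definition Ix :: "'v \<Rightarrow> nat" where
  "Ix c = Suc (Max {i. i \<le> length (geod E x y) - 1 \<and> c \<in> ball_k E k (geod E x y ! i)})"

definition good :: "'v \<Rightarrow> bool" where
  "good c \<longleftrightarrow> c \<notin> By \<and> (\<exists>i\<le>m. c \<in> ball_k E k (X i))"

lemma len_m: "length (geod E x y) - 1 = m" using geod_len by simp

lemma Xm: "X m = y" by (rule geod_m)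

lemma Ix_alt: "Ix c = Suc (Max {i. i \<le> m \<and> c \<in> ball_k E k (X i)})"
  unfolding Ix_def len_m ..

lemma in_ball: "c \<in> ball_k E k w \<longleftrightarrow> d c w \<le> k"
  using dsym by (simp add: ball_k_def)

lemma in_bdry: "c \<in> bdry_k E k w \<longleftrightarrow> d c w = Suc k"
  using dsym by (simp add: bdry_k_def)

lemma Ix_props:
  assumes g: "good c"
  shows "1 \<le> Ix c" "Ix c \<le> m" "d c (X (Ix c - 1)) \<le> k" "d c (X (Ix c)) = Suc k"
proof -
  define S where "S = {i. i \<le> m \<and> c \<in> ball_k E k (X i)}"
  have IxS: "Ix c = Suc (Max S)" by (simp only: Ix_alt S_def)
  have fS: "finite S" by (simp add: S_def)
  have neS: "S \<noteq> {}" using g by (auto simp: good_def S_def)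
  have MS: "Max S \<in> S" using Max_in[OF fS neS] .
  have "Max S \<noteq> m" using MS g Xm by (auto simp: S_def good_def)
  then have Mm: "Max S < m" using MS by (auto simp: S_def)
  show "1 \<le> Ix c" using IxS by simp
  show "Ix c \<le> m" using IxS Mm by simp
  show dk: "d c (X (Ix c - 1)) \<le> k" using MS IxS by (simp add: S_def in_ball)
  have "Ix c \<notin> S" using IxS fS by (metis Max_ge Suc_n_not_le_n)
  then have "\<not> d c (X (Ix c)) \<le> k" using IxS Mm by (simp add: S_def in_ball)
  moreover have "E (X (Ix c - 1)) (X (Ix c))" using geod_step[of "Ix c - 1" x y] IxS Mm by simp
  then have "d c (X (Ix c)) \<le> d c (X (Ix c - 1)) + 1"
    using dE_le[OF symE] by blast
  ultimately show "d c (X (Ix c)) = Suc k" using dk by linarith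
qed

lemma Ix_ge:
  assumes "i \<le> m" "c \<in> ball_k E k (X i)"
  shows "i < Ix c"
proof -
  define S where "S = {i. i \<le> m \<and> c \<in> ball_k E k (X i)}"
  have "i \<in> S" using assms by (simp add: S_def)
  then have "i \<le> Max S" by (simp add: S_def)
  then show ?thesis by (simp only: Ix_alt S_def[symmetric])
qed

text \<open>Determination of the index by the quasi-convexity.\<close>
lemma idx_det:
  assumes lo: "lo < t" "t \<le> m" and dlo: "d w (X lo) \<le> k" and dt: "d w (X t) = Suc k"
  shows "Ix w = t" "w \<notin> By" "good w"
proof -
  have g: "geo (geod E x y)" using geod_props by blast
  have L: "length (geod E x y) = Suc m" by (simp add: geod_len)
  have far: "Suc k < d w (X i)" if "t < i" "i \<le> m" for i
  proof -
    have "d w (X t) < max (d w (X lo)) (d w (X i))" using qc[OF g, of lo t i w] lo that L by simp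
    then show ?thesis using dlo dt by simp
  qed
  have near: "d w (X i) \<le> k" if "lo \<le> i" "i < t" for i
  proof (cases "i = lo")
    case True then show ?thesis using dlo by simp
  next
    case False
    then have "d w (X i) < max (d w (X lo)) (d w (X t))" using qc[OF g, of lo i t w] lo that L by simp
    then show ?thesis using dlo dt by simp
  qed
  define S where "S = {i. i \<le> m \<and> w \<in> ball_k E k (X i)}"
  have fS: "finite S" by (simp add: S_def)
  have t1S: "t - 1 \<in> S" using near[of "t - 1"] lo by (simp add: S_def in_ball)
  have ub: "i \<le> t - 1" if "i \<in> S" for i
  proof (rule ccontr)
    assume "\<not> i \<le> t - 1"
    then have "t \<le> i" by simp
    moreover have "i \<le> m" "d w (X i) \<le> k" using that by (auto simp: S_def in_ball)
    ultimately show False using far[of i] dt by (cases "t = i") auto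
  qed
  have "Max S = t - 1" using Max_eqI[OF fS ub t1S] .
  then show "Ix w = t" using lo by (simp only: Ix_alt S_def[symmetric])
  show nB: "w \<notin> By"
  proof
    assume "w \<in> By"
    then have "d w (X m) \<le> k" using Xm by (simp add: in_ball)
    then show False using far[of m] dt lo by (cases "t = m") auto
  qed
  show "good w" unfolding good_def using nB dlo lo by (auto simp: in_ball intro!: exI[of _ lo])
qed

definition V :: "complex \<Rightarrow> 'v \<Rightarrow> 'v \<Rightarrow> complex" where
  "V z c c' = vz E p k z (c, c', X (Ix c))"

lemma step_geometry:
  assumes g: "good c"
  defines "A \<equiv> ball_k E k (X (Ix c))"
  shows "\<And>n t. P n (- By - A) c t = P n (- A) c t"
    and "\<And>n t. t \<in> By \<Longrightarrow> t \<notin> A \<Longrightarrow> P n (- By - A) c t = 0"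
proof -
  define i where "i = Ix c"
  have i1: "1 \<le> i" and im: "i \<le> m" and dc1: "d c (X (i - 1)) \<le> k" and dc2: "d c (X i) = Suc k"
    using Ix_props[OF g] by (auto simp: i_def)
  define a where "a = X (i - 1)"
  define b where "b = X i"
  have eab: "E a b" using geod_step[of "i - 1" x y] i1 im by (simp add: a_def b_def)
  define L where "L w \<longleftrightarrow> d w a < d w b" for w
  have Ac: "A = ball_k E k b" by (simp add: A_def b_def i_def)
  have cL: "L c" using dc1 dc2 by (simp add: L_def a_def b_def)
  have cA: "c \<notin> A" using dc2 by (simp add: Ac in_ball b_def)
  have jump: "w \<in> A" if "L u" "\<not> L w" "d u w \<le> k" for u w
  proof -
    have "d u w = d u a + 1 + d b w" using cross[OF eab, of u w] that by (simp add: L_def)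
    then show ?thesis using that dsym[of b w] by (simp add: Ac in_ball)
  qed
  have yq: "d y b \<le> d y a"
  proof -
    have "d (X (i - 1)) (X m) = m - (i - 1)" using geod_d[of "i - 1" m x y] i1 im by simp
    moreover have "d (X i) (X m) = m - i" using geod_d[of i m x y] im by simp
    ultimately show ?thesis using Xm dsym[of y a] dsym[of y b] by (simp add: a_def b_def diff_le_mono2)
  qed
  have LB: "w \<in> A" if "L w" "w \<in> By" for w
  proof -
    have "d w y = d w a + 1 + d b y" using cross[OF eab, of w y] that yq by (simp add: L_def)
    moreover have "d w b \<le> d w a + 1" using tri[of w b a] dE[OF eab] by simp
    moreover have "d w y \<le> k" using that by (simp add: in_ball)
    ultimately show ?thesis by (simp add: Ac in_ball)
  qed
  define Inv where "Inv w \<longleftrightarrow> L w \<and> w \<notin> A" for w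
  have Invc: "Inv c" using cL cA by (simp add: Inv_def)
  have Invstep: "(c' \<in> - By - A \<longleftrightarrow> c' \<in> - A) \<and> (c' \<in> - By - A \<longrightarrow> Inv c')"
    if "Inv w" "c' \<in> N w" for w c'
  proof -
    have dk: "d w c' \<le> k" using that(2) by (simp add: ball_k_def)
    show ?thesis
    proof (cases "c' \<in> A")
      case True then show ?thesis by simp
    next
      case False
      then have "L c'" using jump[of w c'] that dk by (auto simp: Inv_def)
      then have "c' \<notin> By" using LB False by blast
      then show ?thesis using False \<open>L c'\<close> by (simp add: Inv_def)
    qed
  qed
  show "P n (- By - A) c t = P n (- A) c t" for n t
    by (rule pn_cong[of Inv, OF Invc Invstep])
  show "P n (- By - A) c t = 0" if t: "t \<in> By" "t \<notin> A" for n t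
  proof (rule pn_zero[of Inv, OF Invc])
    fix w assume w: "Inv w"
    have "w \<noteq> t" using w t LB by (auto simp: Inv_def)
    moreover have "p w t = 0"
    proof (rule p_zero)
      show "t \<notin> N w"
      proof
        assume "t \<in> N w"
        then have "d w t \<le> k" by (simp add: ball_k_def)
        then have "L t" using jump[of w t] w t by (auto simp: Inv_def)
        then show False using LB t by blast
      qed
    qed
    moreover have "\<forall>c'\<in>(- By - A) \<inter> N w. Inv c'" using Invstep[OF w] by blast
    ultimately show "w \<noteq> t \<and> p w t = 0 \<and> (\<forall>c'\<in>(- By - A) \<inter> N w. Inv c')" by blast
  qed
qed

lemma G_cong_coeff: "(\<And>n. P n \<Omega>1 a b = P n \<Omega>2 a' b') \<Longrightarrow> G z a b \<Omega>1 = G z a' b' \<Omega>2"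
  by (simp add: Gz_def)

lemma step_G:
  assumes g: "good c" and b: "b \<in> By" and z: "norm z < 1"
  defines "A \<equiv> ball_k E k (X (Ix c))"
  shows "G z c b (- By) = (if b \<in> A then V z c b else 0) + (\<Sum>c'\<in>A - By. V z c c' * G z c' b (- By))"
proof -
  have fA: "finite A" by (simp add: A_def ball_fin)
  have cA: "c \<notin> A" using Ix_props(4)[OF g] by (simp add: A_def in_ball)
  have bO: "b \<notin> - By" using b by simp
  have "G z c b (- By) = G z c b (- By - A) + (\<Sum>c'\<in>A \<inter> - By. G z c c' (- By - A) * G z c' b (- By))"
    by (rule gi_G[OF z fA cA bO])
  also have "G z c b (- By - A) = (if b \<in> A then V z c b else 0)"
  proof (cases "b \<in> A")
    case True
    then show ?thesis using step_geometry(1)[OF g] 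
      by (simp add: V_def vz_def A_def Gz_def)
  next
    case False
    then show ?thesis using step_geometry(2)[OF g b] by (simp add: A_def Gz_def)
  qed
  also have "(\<Sum>c'\<in>A \<inter> - By. G z c c' (- By - A) * G z c' b (- By)) = (\<Sum>c'\<in>A - By. V z c c' * G z c' b (- By))"
    using step_geometry(1)[OF g] by (intro sum.cong) (auto simp: V_def vz_def A_def Gz_def)
  finally show ?thesis .
qed

end

context pctx
begin

fun chainL :: "'v list \<Rightarrow> bool" where
  "chainL [] = False"
| "chainL [c] = (c \<in> By)"
| "chainL (c # c' # rest) = (good c \<and> (c, c') \<in> Xi E p k (X (Ix c)) \<and> chainL (c' # rest))"

fun Wf :: "complex \<Rightarrow> 'v list \<Rightarrow> complex" where
  "Wf z [] = 1"
| "Wf z [c] = 1"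
| "Wf z (c # c' # rest) = V z c c' * Wf z (c' # rest)"

lemma path_index_Ix: "path_index E k x y cs j = Ix (cs ! (j - 1))"
  by (simp add: path_index_def Ix_def Let_def)

lemma W_eq: "(\<Prod>j\<in>{1..length cs - 1}. vz E p k z (cs ! (j - 1), cs ! j, geod E x y ! path_index E k x y cs j)) = Wf z cs"
proof (induction z cs rule: Wf.induct)
  case (1 z) then show ?case by simp
next
  case (2 z c) then show ?case by simp
next
  case (3 z c c' rest)
  define f where "f cs j = vz E p k z (cs ! (j - 1), cs ! j, X (Ix (cs ! (j - 1))))" for cs j
  have l1: "length (c # c' # rest) - 1 = Suc (length rest)" by simp
  have "(\<Prod>j\<in>{1..length (c # c' # rest) - 1}. f (c # c' # rest) j)
      = f (c # c' # rest) 1 * (\<Prod>j\<in>{Suc 1..Suc (length rest)}. f (c # c' # rest) j)"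
    unfolding l1 by (rule prod.atLeast_Suc_atMost) simp
  also have "(\<Prod>j\<in>{Suc 1..Suc (length rest)}. f (c # c' # rest) j) = (\<Prod>j\<in>{1..length rest}. f (c # c' # rest) (Suc j))"
    by (rule prod.shift_bounds_cl_Suc_ivl)
  also have "\<dots> = (\<Prod>j\<in>{1..length (c' # rest) - 1}. f (c' # rest) j)"
    by (rule prod.cong) (auto simp: f_def nth_Cons split: nat.splits)
  also have "\<dots> = Wf z (c' # rest)" using 3 by (simp add: f_def path_index_Ix)
  finally show ?case by (simp add: f_def path_index_Ix V_def)
qed

lemma all_Suc_split:
  "(\<forall>j. Suc j < Suc (Suc n) \<longrightarrow> Q j) \<longleftrightarrow> (Q 0 \<and> (\<forall>j. Suc j < Suc n \<longrightarrow> Q (Suc j)))"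
proof
  assume "\<forall>j. Suc j < Suc (Suc n) \<longrightarrow> Q j"
  then show "Q 0 \<and> (\<forall>j. Suc j < Suc n \<longrightarrow> Q (Suc j))" by auto
next
  assume a: "Q 0 \<and> (\<forall>j. Suc j < Suc n \<longrightarrow> Q (Suc j))"
  show "\<forall>j. Suc j < Suc (Suc n) \<longrightarrow> Q j"
  proof (intro allI impI)
    fix j assume "Suc j < Suc (Suc n)"
    then show "Q j" using a by (cases j) auto
  qed
qed

lemma chain_nth:
  "chainL cs \<longleftrightarrow> cs \<noteq> [] \<and> last cs \<in> By \<and>
     (\<forall>j. Suc j < length cs \<longrightarrow> good (cs ! j) \<and> (cs ! j, cs ! Suc j) \<in> Xi E p k (X (Ix (cs ! j))))"
proof (induction cs rule: chainL.induct)
  case 1 then show ?case by simp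
next
  case (2 c) then show ?case by simp
next
  case (3 c c' rest)
  have "length (c # c' # rest) = Suc (Suc (length rest))" by simp
  then show ?case unfolding chainL.simps 3
    by (simp only: all_Suc_split[where n = "length rest"]) auto
qed

definition Qs :: "'v \<Rightarrow> 'v \<Rightarrow> 'v list set" where
  "Qs b c = {cs. chainL cs \<and> hd cs = c \<and> last cs = b}"

lemma Qs_By: "c \<in> By \<Longrightarrow> Qs b c = (if c = b then {[b]} else {})"
proof -
  assume c: "c \<in> By"
  have "cs \<in> Qs b c \<longleftrightarrow> c = b \<and> cs = [b]" for cs
  proof (cases cs rule: chainL.cases)
    case (3 c1 c2 rest)
    have "\<not> good c" using c by (simp add: good_def)
    then show ?thesis using 3 by (auto simp: Qs_def)
  qed (use c in \<open>auto simp: Qs_def\<close>)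
  then show ?thesis by auto
qed

lemma Qs_good:
  assumes g: "good c"
  shows "Qs b c = (\<lambda>cs'. c # cs') ` (\<Union>c'\<in>{c'. (c, c') \<in> Xi E p k (X (Ix c))}. Qs b c')"
proof
  show "Qs b c \<subseteq> (\<lambda>cs'. c # cs') ` (\<Union>c'\<in>{c'. (c, c') \<in> Xi E p k (X (Ix c))}. Qs b c')"
  proof
    fix cs assume cs: "cs \<in> Qs b c"
    then have ch: "chainL cs" and h: "hd cs = c" and l: "last cs = b" by (auto simp: Qs_def)
    show "cs \<in> (\<lambda>cs'. c # cs') ` (\<Union>c'\<in>{c'. (c, c') \<in> Xi E p k (X (Ix c))}. Qs b c')"
    proof (cases cs rule: chainL.cases)
      case 1 then show ?thesis using ch by simp
    next
      case (2 c1) then show ?thesis using ch h g by (simp add: good_def)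
    next
      case (3 c1 c2 rest)
      then show ?thesis using ch h l by (auto simp: Qs_def)
    qed
  qed
next
  show "(\<lambda>cs'. c # cs') ` (\<Union>c'\<in>{c'. (c, c') \<in> Xi E p k (X (Ix c))}. Qs b c') \<subseteq> Qs b c"
  proof
    fix cs assume "cs \<in> (\<lambda>cs'. c # cs') ` (\<Union>c'\<in>{c'. (c, c') \<in> Xi E p k (X (Ix c))}. Qs b c')"
    then obtain c' cs' where cs: "cs = c # cs'" and x: "(c, c') \<in> Xi E p k (X (Ix c))" and q: "cs' \<in> Qs b c'"
      by auto
    then have ch: "chainL cs'" "hd cs' = c'" "last cs' = b" by (auto simp: Qs_def)
    then obtain rest where "cs' = c' # rest" by (cases cs') auto
    then show "cs \<in> Qs b c" using cs x ch g by (auto simp: Qs_def)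
  qed
qed

lemma V_zero:
  assumes g: "good c" and c': "c' \<in> ball_k E k (X (Ix c))" and nx: "(c, c') \<notin> Xi E p k (X (Ix c))"
  shows "V z c c' = 0"
proof -
  have "c \<in> bdry_k E k (X (Ix c))" using Ix_props(4)[OF g] by (simp add: in_bdry)
  then have "\<forall>n. \<not> pn p n (- ball_k E k (X (Ix c))) c c' > 0" using c' nx by (auto simp: Xi_def)
  have "\<forall>n. pn p n (- ball_k E k (X (Ix c))) c c' = 0"
  proof
    fix n
    have "0 \<le> pn p n (- ball_k E k (X (Ix c))) c c'" using pn_bounds by blast
    then show "pn p n (- ball_k E k (X (Ix c))) c c' = 0"
      using \<open>\<forall>n. \<not> pn p n (- ball_k E k (X (Ix c))) c c' > 0\<close> by (metis le_less)
  qed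
  then show ?thesis by (simp add: V_def vz_def Gz_def)
qed

lemma claimB:
  assumes z: "norm z < 1" and b: "b \<in> By"
  shows "good c \<Longrightarrow> finite (Qs b c) \<and> (\<Sum>cs\<in>Qs b c. Wf z cs) = G z c b (- By)"
proof (induction "m - Ix c" arbitrary: c rule: less_induct)
  case less
  note g = less.prems
  define A where "A = ball_k E k (X (Ix c))"
  define A' where "A' = {c'. (c, c') \<in> Xi E p k (X (Ix c))}"
  have A'A: "A' \<subseteq> A" by (auto simp: A'_def A_def Xi_def)
  have fA: "finite A" by (simp add: A_def ball_fin)
  have fA': "finite A'" using finite_subset[OF A'A fA] .
  have Ixm: "Ix c \<le> m" using Ix_props(2)[OF g] .
  define h where "h c' = (if c' \<in> By then (if c' = b then 1 else 0) else G z c' b (- By))" for c'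
  have sub: "finite (Qs b c') \<and> (\<Sum>cs\<in>Qs b c'. Wf z cs) = h c'" if c': "c' \<in> A" for c'
  proof (cases "c' \<in> By")
    case True then show ?thesis by (auto simp: Qs_By h_def)
  next
    case False
    have gc': "good c'" using False c' Ixm by (auto simp: good_def A_def intro!: exI[of _ "Ix c"])
    have "Ix c < Ix c'" using Ix_ge[OF Ixm] c' by (simp add: A_def)
    moreover have "Ix c' \<le> m" using Ix_props(2)[OF gc'] .
    ultimately have "m - Ix c' < m - Ix c" using Ixm by linarith
    then show ?thesis using less.hyps[OF _ gc'] False by (simp add: h_def)
  qed
  have QS: "Qs b c = (\<lambda>cs'. c # cs') ` (\<Union>c'\<in>A'. Qs b c')" using Qs_good[OF g] by (simp add: A'_def)
  have fin: "\<forall>c'\<in>A'. finite (Qs b c')" using sub A'A by blast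
  have disj: "\<forall>c1\<in>A'. \<forall>c2\<in>A'. c1 \<noteq> c2 \<longrightarrow> Qs b c1 \<inter> Qs b c2 = {}" by (auto simp: Qs_def)
  have finQ: "finite (Qs b c)" unfolding QS using fA' fin by auto
  have "(\<Sum>cs\<in>Qs b c. Wf z cs) = (\<Sum>cs'\<in>(\<Union>c'\<in>A'. Qs b c'). Wf z (c # cs'))"
    unfolding QS by (subst sum.reindex) (auto simp: inj_on_def)
  also have "\<dots> = (\<Sum>c'\<in>A'. \<Sum>cs'\<in>Qs b c'. Wf z (c # cs'))"
    by (rule sum.UNION_disjoint[OF fA' fin disj])
  also have "\<dots> = (\<Sum>c'\<in>A'. V z c c' * (\<Sum>cs'\<in>Qs b c'. Wf z cs'))"
  proof (rule sum.cong[OF refl])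
    fix c' assume "c' \<in> A'"
    have "Wf z (c # cs') = V z c c' * Wf z cs'" if cs'Q: "cs' \<in> Qs b c'" for cs'
    proof -
      obtain rest where "cs' = c' # rest" using cs'Q by (cases cs') (auto simp: Qs_def)
      then show ?thesis by simp
    qed
    then show "(\<Sum>cs'\<in>Qs b c'. Wf z (c # cs')) = V z c c' * (\<Sum>cs'\<in>Qs b c'. Wf z cs')"
      by (simp add: sum_distrib_left)
  qed
  also have "\<dots> = (\<Sum>c'\<in>A'. V z c c' * h c')"
    using sub A'A by (intro sum.cong) auto
  also have "\<dots> = (\<Sum>c'\<in>A. V z c c' * h c')"
    by (rule sum.mono_neutral_left[OF fA A'A]) (auto simp: A_def A'_def V_zero[OF g])
  also have "\<dots> = (\<Sum>c'\<in>A \<inter> By. V z c c' * h c') + (\<Sum>c'\<in>A - By. V z c c' * h c')"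
    using fA by (metis Diff_eq sum.Int_Diff)
  also have "(\<Sum>c'\<in>A \<inter> By. V z c c' * h c') = (if b \<in> A then V z c b else 0)"
  proof -
    have "(\<Sum>c'\<in>A \<inter> By. V z c c' * h c') = (\<Sum>c'\<in>A \<inter> By. if c' = b then V z c c' else 0)"
      by (rule sum.cong) (auto simp: h_def)
    also have "\<dots> = (if b \<in> A \<inter> By then V z c b else 0)" using fA by (simp add: sum.delta)
    finally show ?thesis using b by simp
  qed
  also have "(\<Sum>c'\<in>A - By. V z c c' * h c') = (\<Sum>c'\<in>A - By. V z c c' * G z c' b (- By))"
    by (rule sum.cong) (auto simp: h_def)
  also have "(if b \<in> A then V z c b else 0) + \<dots> = G z c b (- By)"
    using step_G[OF g b z] by (simp add: A_def)
  finally show ?case using finQ by simp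
qed

end

lemma inc_mono:
  assumes "\<forall>j. Suc j < l \<longrightarrow> s j < (s (Suc j) :: nat)" "i \<le> j" "j < l"
  shows "s i + (j - i) \<le> s j"
  using assms(2,3)
proof (induction j)
  case 0 then show ?case by simp
next
  case (Suc j)
  show ?case
  proof (cases "i = Suc j")
    case True then show ?thesis by simp
  next
    case False
    then have "i \<le> j" using Suc by simp
    then have "s i + (j - i) \<le> s j" using Suc by simp
    moreover have "s j < s (Suc j)" using assms(1) Suc by simp
    ultimately show ?thesis using \<open>i \<le> j\<close> by linarith
  qed
qed

context pctx
begin

lemma Xi_parts: "(a, b) \<in> Xi E p k w \<Longrightarrow> d a w = Suc k \<and> d b w \<le> k"
  by (simp add: Xi_def in_ball in_bdry)

lemma claimA:
  assumes x: "x \<notin> By"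
  shows "{cs \<in> Xi_path E p k x y. hd cs = x \<and> last cs = b} = Qs b x"
proof
  show "{cs \<in> Xi_path E p k x y. hd cs = x \<and> last cs = b} \<subseteq> Qs b x"
  proof
    fix cs assume cs: "cs \<in> {cs \<in> Xi_path E p k x y. hd cs = x \<and> last cs = b}"
    then obtain "is" where idx: "Xi_path_idx E p k x y cs is" and h: "hd cs = x" and lst: "last cs = b"
      by (auto simp: Xi_path_def)
    define l where "l = length is"
    note H = idx[unfolded Xi_path_idx_def Let_def len_m, folded l_def]
    have F1: "length cs = Suc l" "0 < l" "l \<le> m" using H by blast+
    have F2: "0 < is ! 0" "\<forall>j. Suc j < l \<longrightarrow> is ! j < is ! Suc j" "is ! (l - 1) \<le> m" using H by blast+
    have F3: "cs ! 0 \<in> ball_k E k x \<inter> bdry_k E k (X (is ! 0))" using H by blast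
    have F4: "\<forall>j. 1 \<le> j \<and> j \<le> l - 1 \<longrightarrow> cs ! j \<in> ball_k E k (X (is ! (j - 1))) \<inter> bdry_k E k (X (is ! j))"
      using H by blast
    have F5: "cs ! l \<in> ball_k E k (X (is ! (l - 1))) \<inter> By" using H by blast
    have F6: "\<forall>j. 1 \<le> j \<and> j \<le> l \<longrightarrow> (cs ! (j - 1), cs ! j) \<in> Xi E p k (X (is ! (j - 1)))"
      using H by blast
    have ne: "cs \<noteq> []" using F1 by auto
    have lastB: "last cs \<in> By" using F5 F1 ne by (simp add: last_conv_nth)
    have step: "good (cs ! j) \<and> (cs ! j, cs ! Suc j) \<in> Xi E p k (X (Ix (cs ! j)))" if j: "j < l" for j
    proof -
      define t where "t = is ! j"
      define lo where "lo = (if j = 0 then 0 else is ! (j - 1))"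
      have lot: "lo < t"
      proof (cases "j = 0")
        case True then show ?thesis using F2 by (simp add: lo_def t_def)
      next
        case False
        then have "Suc (j - 1) < l" using j by simp
        then have "is ! (j - 1) < is ! Suc (j - 1)" using F2(2) by blast
        then show ?thesis using False by (simp add: lo_def t_def)
      qed
      have "is ! j + (l - 1 - j) \<le> is ! (l - 1)" using inc_mono[OF F2(2), of j "l - 1"] j by simp
      then have tm: "t \<le> m" using F2(3) unfolding t_def by linarith
      have dlo: "d (cs ! j) (X lo) \<le> k"
      proof (cases "j = 0")
        case True then show ?thesis using F3 geod_0[of x y] by (simp add: lo_def in_ball)
      next
        case False then show ?thesis using F4 j by (simp add: lo_def in_ball)
      qed
      have dt: "d (cs ! j) (X t) = Suc k"
      proof (cases "j = 0")
        case True then show ?thesis using F3 by (simp add: t_def in_bdry)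
      next
        case False then show ?thesis using F4 j by (simp add: t_def in_bdry)
      qed
      have "Ix (cs ! j) = t" "good (cs ! j)" using idx_det[OF lot tm dlo dt] by auto
      moreover have "(cs ! j, cs ! Suc j) \<in> Xi E p k (X t)" using F6[rule_format, of "Suc j"] j by (simp add: t_def)
      ultimately show ?thesis by simp
    qed
    have "chainL cs" unfolding chain_nth using ne lastB step F1 by simp
    then show "cs \<in> Qs b x" using h lst by (simp add: Qs_def)
  qed
next
  show "Qs b x \<subseteq> {cs \<in> Xi_path E p k x y. hd cs = x \<and> last cs = b}"
  proof
    fix cs assume "cs \<in> Qs b x"
    then have ch: "chainL cs" and h: "hd cs = x" and lst: "last cs = b" by (auto simp: Qs_def)
    have ne: "cs \<noteq> []" and lastB: "last cs \<in> By"
      and CH: "\<forall>j. Suc j < length cs \<longrightarrow> good (cs ! j) \<and> (cs ! j, cs ! Suc j) \<in> Xi E p k (X (Ix (cs ! j)))"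
      using ch unfolding chain_nth by auto
    define l where "l = length cs - 1"
    have lc: "length cs = Suc l" using ne by (simp add: l_def)
    define "is" where "is = map (\<lambda>j. Ix (cs ! j)) [0..<l]"
    have isj: "j < l \<Longrightarrow> is ! j = Ix (cs ! j)" for j by (simp add: is_def)
    have lis: "length is = l" by (simp add: is_def)
    have cs0: "cs ! 0 = x" using h ne by (simp add: hd_conv_nth)
    have l0: "0 < l"
    proof (rule ccontr)
      assume "\<not> 0 < l"
      then have "last cs = x" using lc cs0 ne by (simp add: last_conv_nth)
      then show False using lastB x by simp
    qed
    have G: "good (cs ! j)" and XI: "(cs ! j, cs ! Suc j) \<in> Xi E p k (X (is ! j))" if "j < l" for j
      using CH that lc isj by auto
    have XIp: "d (cs ! j) (X (is ! j)) = Suc k" "d (cs ! Suc j) (X (is ! j)) \<le> k" if "j < l" for j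
      using Xi_parts[OF XI[OF that]] by auto
    have ism: "is ! j \<le> m" if "j < l" for j using Ix_props(2)[OF G[OF that]] isj that by simp
    have inc: "\<forall>j. Suc j < l \<longrightarrow> is ! j < is ! Suc j"
    proof (intro allI impI)
      fix j assume j: "Suc j < l"
      have "is ! j < Ix (cs ! Suc j)"
        by (rule Ix_ge) (use ism[of j] XIp(2)[of j] j in \<open>auto simp: in_ball\<close>)
      then show "is ! j < is ! Suc j" using isj j by simp
    qed
    have is0: "0 < is ! 0" using isj[of 0] l0 by (simp add: Ix_def)
    have lm: "l \<le> m"
    proof -
      have "is ! 0 + (l - 1 - 0) \<le> is ! (l - 1)" using inc_mono[OF inc, of 0 "l - 1"] l0 by simp
      then show ?thesis using is0 ism[of "l - 1"] l0 by linarith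
    qed
    have "Xi_path_idx E p k x y cs is"
      unfolding Xi_path_idx_def Let_def len_m lis
    proof (intro conjI allI impI)
      show "length cs = Suc l" "0 < l" "l \<le> m" "0 < is ! 0" by (fact lc, fact l0, fact lm, fact is0)
      show "is ! j < is ! Suc j" if "Suc j < l" for j using inc that by blast
      show "is ! (l - 1) \<le> m" using ism l0 by simp
      show "cs ! 0 \<in> ball_k E k x \<inter> bdry_k E k (X (is ! 0))"
        using cs0 XIp(1)[of 0] l0 by (simp add: in_ball in_bdry)
      show "cs ! j \<in> ball_k E k (X (is ! (j - 1))) \<inter> bdry_k E k (X (is ! j))" if "1 \<le> j \<and> j \<le> l - 1" for j
      proof -
        have j: "j - 1 < l" "j < l" "Suc (j - 1) = j" using that l0 by auto
        show ?thesis using XIp(2)[OF j(1)] XIp(1)[OF j(2)] j(3) by (simp add: in_ball in_bdry)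
      qed
      show "cs ! l \<in> ball_k E k (X (is ! (l - 1))) \<inter> By"
        using XIp(2)[of "l - 1"] l0 lastB lc ne by (simp add: in_ball last_conv_nth)
      show "(cs ! (j - 1), cs ! j) \<in> Xi E p k (X (is ! (j - 1)))" if "1 \<le> j \<and> j \<le> l" for j
      proof -
        have j: "j - 1 < l" using that by auto
        show ?thesis using XI[OF j] that by simp
      qed
    qed
    then show "cs \<in> {cs \<in> Xi_path E p k x y. hd cs = x \<and> last cs = b}"
      using h lst by (auto simp: Xi_path_def)
  qed
qed

lemma J_eq_G:
  assumes x: "x \<notin> By" and b: "b \<in> By" and z: "norm z < 1"
  shows "J_path E p k (vz E p k z) x y x b = G z x b (- By)"
proof -
  have gx: "good x" unfolding good_def using x geod_0[of x y] by (auto simp: ball_k_def intro!: exI[of _ 0])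
  have "J_path E p k (vz E p k z) x y x b = (\<Sum>cs\<in>Qs b x. Wf z cs)"
    unfolding J_path_def claimA[OF x] W_eq ..
  also have "\<dots> = G z x b (- By)" using claimB[OF z b gx] by simp
  finally show ?thesis .
qed

end

theorem proposition4p6:
  fixes E :: "'v \<Rightarrow> 'v \<Rightarrow> bool" and \<Gamma> :: "('v \<Rightarrow> 'v) set"
    and p :: "'v \<Rightarrow> 'v \<Rightarrow> real" and k :: nat
  assumes tree: "is_tree E"
    and valence: "bounded_valence E"
    and group: "aut_subgroup E \<Gamma>"
    and cofinite: "finite (orbits \<Gamma>)"
    and kernel: "transition_kernel p"
    and invariant: "\<forall>g\<in>\<Gamma>. \<forall>x y. p (g x) (g y) = p x y"
    and irred: "irreducible_kernel p"
    and range: "\<forall>x y. gdist E x y > k \<longrightarrow> p x y = 0"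
  shows "\<exists>r>0. \<forall>z::complex. norm z < r \<longrightarrow>
           (\<forall>a b y. (a, b) \<in> Xi E p k y \<longrightarrow>
              Gz p z a b (- ball_k E k y)
              = z * complex_of_real (p a b)
                + (\<Sum>\<^sub>\<infinity>c\<in>- ball_k E k y.
                     z * complex_of_real (p a c) * J_path E p k (vz E p k z) c y c b))"
proof -
  interpret K: kctx E p k
    by (intro kctx.intro tgraph.intro kctx_axioms.intro tree valence kernel range)
  show ?thesis
  proof (intro exI[of _ 1] conjI allI impI)
    show "(0::real) < 1" by simp
    fix z :: complex and a b y
    assume z: "norm z < 1" and ab: "(a, b) \<in> Xi E p k y"
    have da: "gdist E y a = Suc k" and db: "gdist E y b \<le> k"
      using ab by (auto simp: Xi_def bdry_k_def ball_k_def)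
    have bO: "b \<notin> - ball_k E k y" using db by (simp add: ball_k_def)
    have abne: "a \<noteq> b" using da db by auto
    define S where "S = - ball_k E k y \<inter> ball_k E k a"
    have fS: "finite S" using K.N_finite by (simp add: S_def)
    have J: "J_path E p k (vz E p k z) c y c b = Gz p z c b (- ball_k E k y)"
      if c: "c \<in> - ball_k E k y" for c
    proof -
      interpret PC: pctx E p k c y by unfold_locales
      show ?thesis using PC.J_eq_G[of b z] c db z by (simp add: ball_k_def)
    qed
    have "(\<Sum>\<^sub>\<infinity>c\<in>- ball_k E k y. z * complex_of_real (p a c) * J_path E p k (vz E p k z) c y c b)
        = (\<Sum>\<^sub>\<infinity>c\<in>S. z * complex_of_real (p a c) * J_path E p k (vz E p k z) c y c b)"
      by (rule infsum_cong_neutral) (auto simp: S_def K.p_zero)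
    also have "\<dots> = (\<Sum>c\<in>S. z * complex_of_real (p a c) * J_path E p k (vz E p k z) c y c b)"
      using fS by simp
    also have "\<dots> = (\<Sum>c\<in>S. z * complex_of_real (p a c) * Gz p z c b (- ball_k E k y))"
      by (rule sum.cong) (auto simp: S_def J)
    finally have R: "(\<Sum>\<^sub>\<infinity>c\<in>- ball_k E k y. z * complex_of_real (p a c) * J_path E p k (vz E p k z) c y c b)
        = (\<Sum>c\<in>S. z * complex_of_real (p a c) * Gz p z c b (- ball_k E k y))" .
    show "Gz p z a b (- ball_k E k y) = z * complex_of_real (p a b)
            + (\<Sum>\<^sub>\<infinity>c\<in>- ball_k E k y. z * complex_of_real (p a c) * J_path E p k (vz E p k z) c y c b)"
      unfolding R S_def by (rule K.first_step_G[OF z bO abne])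
  qed
qed


end
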